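(* Let $\Phi$ (dimension $d$) and $\Psi$ (dimension $e$) be $\mathbf t$-modules over $K$, let $\delta\in\mathrm{Der}(\Phi,\Psi)$, and let $X$ be the $\mathbf t$-module with $X_a=\begin{bmatrix}\Phi_a&0\\ \delta(a)&\Psi_a\end{bmatrix}$, giving the short exact sequence $0\to\Psi\xrightarrow{i}X\xrightarrow{\pi}\Phi\to0$ with $i=\begin{bmatrix}0\\ I_e\end{bmatrix}$, $\pi=\begin{bmatrix}I_d&0\end{bmatrix}$. Then: (i) for every $\mathbf t$-module $\Xi$ of dimension $r$ and every morphism $g:\Xi\to\Phi$ of $\mathbf t$-modules, the pullback of this sequence along $g$ exists in the category of $\mathbf t$-modules and is the $\mathbf t$-module $Y$ with $Y_a=\begin{bmatrix}\Xi_a&0\\ \delta(a)g&\Psi_a\end{bmatrix}$ (i.e. the extension given by the biderivation $\delta\cdot g$), together with the morphisms $\begin{bmatrix}I_r&0\end{bmatrix}:Y\to\Xi$ and $\begin{bmatrix}g&0\\0&I_e\end{bmatrix}:Y\to X$; (ii) for every $\mathbf t$-module $\Xi$ of dimension $r$ and every morphism $f:\Psi\to\Xi$ of $\mathbf t$-modules, the pushout of this sequence along $f$ exists in the category of $\mathbf t$-modules and is the $\mathbf t$-module $Y$ with $Y_a=\begin{bmatrix}\Phi_a&0\\ f\delta(a)&\Xi_a\end{bmatrix}$ (the extension given by the biderivation $f\cdot\delta$), together with the morphisms $\begin{bmatrix}0\\ I_r\end{bmatrix}:\Xi\to Y$ and $\begin{bmatrix}I_d&0\\0&f\end{bmatrix}:X\to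 Y$.
   Context: $A=\mathbb F_q[t]$, $K$ a field of characteristic $p$ with $\mathbb F_q$-algebra map $\iota:A\to K$, $\theta=\iota(t)$; $K\{\tau\}$ twisted polynomials with $\tau x=x^q\tau$. A $\mathbf t$-module of dimension $d$: $\mathbb F_q$-algebra homomorphism $\Phi:\mathbb F_q[t]\to\mathrm{Mat}_d(K\{\tau\})$ with $\Phi_t=(\theta I+N)+\sum_{i\ge1}M_i\tau^i$, $N$ nilpotent. A morphism from $\Psi$ (dim $e$) to $\Phi$ (dim $d$) is $f\in\mathrm{Mat}_{d\times e}(K\{\tau\})$ with $f\Psi_t=\Phi_tf$; composition is matrix multiplication. $\mathrm{Der}(\Phi,\Psi)$ is the space of $\mathbb F_q$-linear $\delta:\mathbb F_q[t]\to\mathrm{Mat}_{e\times d}(K\{\tau\})$ with $\delta(ab)=\Psi_a\delta(b)+\delta(a)\Phi_b$. *)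

theory Defs
  imports "HOL-Computational_Algebra.Polynomial" "Jordan_Normal_Form.Matrix"
begin

text \<open>K is the type 'k (a field).  q = p^m with p = char K.
  A = F_q[t] is represented as the set of polynomials in 'k poly (variable t)
  whose coefficients lie in F_q; iota(a) = poly a theta.
  Twisted polynomials K{tau} are represented by 'k poly as well
  (coefficient i = coefficient of tau^i), with the twisted product tmult.\<close>

definition Fq :: "nat \<Rightarrow> 'k::field set" where
  "Fq q = {x. x ^ q = x}"

definition Aset :: "nat \<Rightarrow> 'k::field poly set" where
  "Aset q = {a. \<forall>i. coeff a i \<in> Fq q}"

definition tvar :: "'k::field poly" where
  "tvar = [:0, 1:]"

text \<open>twisted product in K{tau}: (sum a_i tau^i)(sum b_j tau^j) = sum a_i b_j^(q^i) tau^(i+j)\<close>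
definition tmult :: "nat \<Rightarrow> 'k::field poly \<Rightarrow> 'k poly \<Rightarrow> 'k poly" where
  "tmult q f g = (\<Sum>i\<le>degree f. monom (coeff f i) i * map_poly (\<lambda>c. c ^ (q ^ i)) g)"

definition tmat_mult :: "nat \<Rightarrow> 'k::field poly mat \<Rightarrow> 'k poly mat \<Rightarrow> 'k poly mat" where
  "tmat_mult q M N = mat (dim_row M) (dim_col N)
     (\<lambda>(i,j). \<Sum>k<dim_col M. tmult q (M $$ (i,k)) (N $$ (k,j)))"

definition row_block :: "'a::zero mat \<Rightarrow> 'a mat \<Rightarrow> 'a mat" where
  "row_block M N = four_block_mat M N (0\<^sub>m 0 (dim_col M)) (0\<^sub>m 0 (dim_col N))"

definition const_part :: "'k::field poly mat \<Rightarrow> 'k mat" where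
  "const_part M = mat (dim_row M) (dim_col M) (\<lambda>ij. coeff (M $$ ij) 0)"

text \<open>An F_q-algebra homomorphism A -> Mat_d(K{tau}) (scalars c in F_q act as
  the constant twisted polynomials [:c:], which are central)\<close>
definition alg_hom_A :: "nat \<Rightarrow> nat \<Rightarrow> ('k::field poly \<Rightarrow> 'k poly mat) \<Rightarrow> bool" where
  "alg_hom_A q d Phi \<longleftrightarrow>
     (\<forall>a\<in>Aset q. Phi a \<in> carrier_mat d d) \<and>
     (\<forall>a\<in>Aset q. \<forall>b\<in>Aset q. Phi (a + b) = Phi a + Phi b) \<and>
     (\<forall>c\<in>Fq q. \<forall>a\<in>Aset q. Phi (Polynomial.smult c a) = [:c:] \<cdot>\<^sub>m Phi a) \<and>
     (\<forall>a\<in>Aset q. \<forall>b\<in>Aset q. Phi (a * b) = tmat_mult q (Phi a) (Phi b)) \<and>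
     Phi 1 = 1\<^sub>m d"

text \<open>t-module of dimension d: Phi_t = (theta I + N) + sum M_i tau^i with N nilpotent\<close>
definition tmodule :: "nat \<Rightarrow> 'k::field \<Rightarrow> nat \<Rightarrow> ('k poly \<Rightarrow> 'k poly mat) \<Rightarrow> bool" where
  "tmodule q theta d Phi \<longleftrightarrow> alg_hom_A q d Phi \<and>
     (\<exists>n. (const_part (Phi tvar) - theta \<cdot>\<^sub>m 1\<^sub>m d) ^\<^sub>m n = 0\<^sub>m d d)"

definition tmorph :: "nat \<Rightarrow> nat \<Rightarrow> ('k::field poly \<Rightarrow> 'k poly mat) \<Rightarrow> nat \<Rightarrow> ('k poly \<Rightarrow> 'k poly mat)
    \<Rightarrow> 'k poly mat \<Rightarrow> bool" where
  "tmorph q e Psi d Phi f \<longleftrightarrow> f \<in> carrier_mat d e \<and>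
     tmat_mult q f (Psi tvar) = tmat_mult q (Phi tvar) f"

definition is_der :: "nat \<Rightarrow> nat \<Rightarrow> ('k::field poly \<Rightarrow> 'k poly mat) \<Rightarrow> nat \<Rightarrow> ('k poly \<Rightarrow> 'k poly mat)
    \<Rightarrow> ('k poly \<Rightarrow> 'k poly mat) \<Rightarrow> bool" where
  "is_der q d Phi e Psi delta \<longleftrightarrow>
     (\<forall>a\<in>Aset q. delta a \<in> carrier_mat e d) \<and>
     (\<forall>a\<in>Aset q. \<forall>b\<in>Aset q. delta (a + b) = delta a + delta b) \<and>
     (\<forall>c\<in>Fq q. \<forall>a\<in>Aset q. delta (Polynomial.smult c a) = [:c:] \<cdot>\<^sub>m delta a) \<and>
     (\<forall>a\<in>Aset q. \<forall>b\<in>Aset q.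
        delta (a * b) = tmat_mult q (Psi a) (delta b) + tmat_mult q (delta a) (Phi b))"

text \<open>Pullback in the category of t-modules of PiM : X -> Phi and g : Xi -> Phi,
  with candidate object Y (dim y) and projections P1 : Y -> Xi, P2 : Y -> X\<close>
definition is_pullback :: "nat \<Rightarrow> 'k::field \<Rightarrow>
    nat \<Rightarrow> ('k poly \<Rightarrow> 'k poly mat) \<Rightarrow> nat \<Rightarrow> ('k poly \<Rightarrow> 'k poly mat) \<Rightarrow>
    nat \<Rightarrow> ('k poly \<Rightarrow> 'k poly mat) \<Rightarrow> 'k poly mat \<Rightarrow> 'k poly mat \<Rightarrow>
    nat \<Rightarrow> ('k poly \<Rightarrow> 'k poly mat) \<Rightarrow> 'k poly mat \<Rightarrow> 'k poly mat \<Rightarrow> bool" where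
  "is_pullback q theta dX X dP Phi dXi Xi PiM g dY Y P1 P2 \<longleftrightarrow>
     tmodule q theta dY Y \<and> tmorph q dY Y dXi Xi P1 \<and> tmorph q dY Y dX X P2 \<and>
     tmat_mult q g P1 = tmat_mult q PiM P2 \<and>
     (\<forall>s Z u v. tmodule q theta s Z \<and> tmorph q s Z dXi Xi u \<and> tmorph q s Z dX X v \<and>
        tmat_mult q g u = tmat_mult q PiM v \<longrightarrow>
        (\<exists>!w. tmorph q s Z dY Y w \<and> tmat_mult q P1 w = u \<and> tmat_mult q P2 w = v))"

text \<open>Pushout in the category of t-modules of I : Psi -> X and f : Psi -> Xi,
  with candidate object Y (dim y) and injections J1 : Xi -> Y, J2 : X -> Y\<close>
definition is_pushout :: "nat \<Rightarrow> 'k::field \<Rightarrow>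
    nat \<Rightarrow> ('k poly \<Rightarrow> 'k poly mat) \<Rightarrow> nat \<Rightarrow> ('k poly \<Rightarrow> 'k poly mat) \<Rightarrow>
    nat \<Rightarrow> ('k poly \<Rightarrow> 'k poly mat) \<Rightarrow> 'k poly mat \<Rightarrow> 'k poly mat \<Rightarrow>
    nat \<Rightarrow> ('k poly \<Rightarrow> 'k poly mat) \<Rightarrow> 'k poly mat \<Rightarrow> 'k poly mat \<Rightarrow> bool" where
  "is_pushout q theta dX X dS Psi dXi Xi IM f dY Y J1 J2 \<longleftrightarrow>
     tmodule q theta dY Y \<and> tmorph q dXi Xi dY Y J1 \<and> tmorph q dX X dY Y J2 \<and>
     tmat_mult q J1 f = tmat_mult q J2 IM \<and>
     (\<forall>s Z u v. tmodule q theta s Z \<and> tmorph q dXi Xi s Z u \<and> tmorph q dX X s Z v \<and>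
        tmat_mult q u f = tmat_mult q v IM \<longrightarrow>
        (\<exists>!w. tmorph q dY Y s Z w \<and> tmat_mult q w J1 = u \<and> tmat_mult q w J2 = v))"

end

theory Submission
  imports Defs "HOL-Computational_Algebra.Primes"
begin


lemma char_frob:
  assumes "prime p" "of_nat p = (0::'k::field)" "q = p ^ m"
  shows "(x + y :: 'k)^q = x^q + y^q"
proof -
  have "CHAR('k) dvd p" using assms(2) of_nat_eq_0_iff_char_dvd by blast
  moreover have "CHAR('k) \<noteq> 1" by simp
  ultimately have "CHAR('k) = p" using assms(1) by (metis prime_nat_iff)
  then show ?thesis using assms freshmans_dream'[of q m x y] by simp
qed

locale tw = fixes q :: nat and K :: "'k::field itself"
  assumes frob: "\<And>x y :: 'k. (x+y)^q = x^q + y^q" and qpos: "q > 0"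
begin

definition mp :: "nat \<Rightarrow> 'k poly \<Rightarrow> 'k poly" where
  "mp n g = map_poly (\<lambda>c. c ^ (q ^ n)) g"

lemma frobn_add: "(x + y :: 'k) ^ (q ^ n) = x ^ (q ^ n) + y ^ (q ^ n)"
proof (induction n)
  case (Suc n)
  have "(x + y) ^ (q ^ Suc n) = ((x + y) ^ (q ^ n)) ^ q"
    by (simp add: power_mult[symmetric] mult.commute)
  also have "\<dots> = (x ^ (q ^ n)) ^ q + (y ^ (q ^ n)) ^ q" by (simp add: Suc frob)
  also have "\<dots> = x ^ (q ^ Suc n) + y ^ (q ^ Suc n)"
    by (simp add: power_mult[symmetric] mult.commute)
  finally show ?case .
qed simp

lemma frobn_0: "(0::'k) ^ (q ^ n) = 0" using qpos by simp

lemma frobn_sum: "(sum f A :: 'k) ^ (q ^ n) = (\<Sum>i\<in>A. f i ^ (q ^ n))"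
  by (induction A rule: infinite_finite_induct) (auto simp: frobn_add frobn_0)

lemma coeff_mp: "coeff (mp n g) i = coeff g i ^ (q ^ n)"
  unfolding mp_def by (simp add: coeff_map_poly frobn_0)

lemma mp_add: "mp n (f + g) = mp n f + mp n g"
  by (rule poly_eqI) (simp add: coeff_mp frobn_add)

lemma mp_0[simp]: "mp n 0 = 0" by (simp add: mp_def)

lemma mp_sum: "mp n (sum f A) = (\<Sum>i\<in>A. mp n (f i))"
  by (induction A rule: infinite_finite_induct) (auto simp: mp_add)

lemma mp_mult: "mp n (f * g) = mp n f * mp n g"
  by (rule poly_eqI) (simp add: coeff_mp coeff_mult frobn_sum power_mult_distrib)

lemma mp_monom: "mp n (monom a j) = monom (a ^ (q ^ n)) j"
  unfolding mp_def by (simp add: map_poly_monom frobn_0)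

lemma mp_mp: "mp i (mp j h) = mp (i + j) h"
  by (rule poly_eqI) (simp add: coeff_mp power_mult[symmetric] power_add mult.commute)

lemma mp_zero_idx[simp]: "mp 0 g = g"
  by (rule poly_eqI) (simp add: coeff_mp)

lemma mp_one[simp]: "mp n 1 = 1"
  unfolding mp_def by simp

lemma Fq_pow: "c \<in> Fq q \<Longrightarrow> (c::'k) ^ (q ^ n) = c"
proof (induction n)
  case (Suc n)
  have "c ^ (q ^ Suc n) = (c ^ q) ^ (q ^ n)"
    by (simp add: power_mult[symmetric] mult.commute)
  then show ?case using Suc by (simp add: Fq_def)
qed simp

lemma mp_const: "c \<in> Fq q \<Longrightarrow> mp n [:c:] = [:c:]"
  by (rule poly_eqI) (simp add: coeff_mp Fq_pow frobn_0 coeff_pCons split: nat.splits)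

lemma tmult_bound:
  fixes f g :: "'k poly"
  assumes "degree f \<le> N"
  shows "tmult q f g = (\<Sum>i\<le>N. monom (coeff f i) i * mp i g)"
  unfolding tmult_def mp_def[symmetric]
  by (rule sum.mono_neutral_left) (use assms in \<open>auto simp: coeff_eq_0\<close>)

lemma tmult_add_left:
  fixes f g h :: "'k poly" and a c :: 'k
  shows "tmult q (f + g) h = tmult q f h + tmult q g h"
proof -
  let ?N = "max (degree f) (degree g)"
  have "degree (f + g) \<le> ?N" by (rule degree_add_le) auto
  then show ?thesis
    by (simp add: tmult_bound[of _ ?N] sum.distrib add_monom[symmetric] distrib_right)
qed

lemma tmult_add_right:
  fixes f g h :: "'k poly" and a c :: 'k
  shows "tmult q f (g + h) = tmult q f g + tmult q f h"
  unfolding tmult_def mp_def[symmetric]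
  by (simp add: mp_add distrib_left sum.distrib)

lemma tmult_0_left[simp]:
  fixes f g h :: "'k poly" and a c :: 'k
  shows "tmult q 0 g = 0"
  unfolding tmult_def by simp

lemma tmult_0_right[simp]:
  fixes f g h :: "'k poly" and a c :: 'k
  shows "tmult q f 0 = 0"
  unfolding tmult_def mp_def[symmetric] by simp

lemma tmult_sum_left:
  fixes h :: "'k poly" and f :: "'b \<Rightarrow> 'k poly"
  shows "tmult q (sum f A) h = (\<Sum>i\<in>A. tmult q (f i) h)"
  by (induction A rule: infinite_finite_induct) (auto simp: tmult_add_left)

lemma tmult_sum_right:
  fixes h :: "'k poly" and f :: "'b \<Rightarrow> 'k poly"
  shows "tmult q h (sum f A) = (\<Sum>i\<in>A. tmult q h (f i))"
  by (induction A rule: infinite_finite_induct) (auto simp: tmult_add_right)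

lemma tmult_monom_left:
  fixes f g h :: "'k poly" and a c :: 'k
  shows "tmult q (monom a n) g = monom a n * mp n g"
proof -
  have "tmult q (monom a n) g = (\<Sum>i\<le>n. monom (coeff (monom a n) i) i * mp i g)"
    by (rule tmult_bound) (simp add: degree_monom_le)
  also have "\<dots> = (\<Sum>i\<in>{n}. monom (coeff (monom a n) i) i * mp i g)"
    by (rule sum.mono_neutral_right) auto
  finally show ?thesis by simp
qed

lemma tmult_alt:
  fixes f g h :: "'k poly" and a c :: 'k
  shows "tmult q f g = (\<Sum>i\<le>degree f. monom (coeff f i) i * mp i g)"
  by (rule tmult_bound) simp

lemma tmult_assoc:
  fixes f g h :: "'k poly" and a c :: 'k
  shows "tmult q (tmult q f g) h = tmult q f (tmult q g h)"
proof -
  have g: "mp i g = (\<Sum>j\<le>degree g. monom (coeff g j ^ (q ^ i)) j)" for i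
  proof -
    have "mp i g = mp i (\<Sum>j\<le>degree g. monom (coeff g j) j)" by (simp add: poly_as_sum_of_monoms)
    then show ?thesis by (simp add: mp_sum mp_monom)
  qed
  have "tmult q f g = (\<Sum>i\<le>degree f. \<Sum>j\<le>degree g. monom (coeff f i * coeff g j ^ (q ^ i)) (i + j))"
    by (simp add: tmult_alt[of f g] g sum_distrib_left mult_monom)
  then have "tmult q (tmult q f g) h =
     (\<Sum>i\<le>degree f. \<Sum>j\<le>degree g. monom (coeff f i * coeff g j ^ (q ^ i)) (i + j) * mp (i + j) h)"
    by (simp add: tmult_sum_left tmult_monom_left)
  also have "\<dots> = tmult q f (tmult q g h)"
    by (simp add: tmult_alt[of f] tmult_alt[of g] mp_sum mp_mult mp_monom mp_mp sum_distrib_left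
        mult_monom mult.assoc[symmetric])
  finally show ?thesis .
qed

lemma tmult_one_left[simp]:
  fixes f g h :: "'k poly" and a c :: 'k
  shows "tmult q 1 g = g"
  using tmult_monom_left[of 1 0 g] by (simp add: one_pCons monom_0)

lemma tmult_one_right[simp]:
  fixes f g h :: "'k poly" and a c :: 'k
  shows "tmult q f 1 = f"
  by (simp add: tmult_alt poly_as_sum_of_monoms)

lemma tmult_const_left:
  fixes f g h :: "'k poly" and a c :: 'k
  shows "tmult q [:c:] g = [:c:] * g"
  using tmult_monom_left[of c 0 g] by (simp add: monom_0)

lemma tmult_smult_left:
  fixes f g h :: "'k poly" and a c :: 'k
  shows "tmult q ([:c:] * f) g = [:c:] * tmult q f g"
proof -
  have "degree ([:c:] * f) \<le> degree f" by (simp add: degree_smult_le)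
  then show ?thesis
    by (simp add: tmult_bound[of _ "degree f"] tmult_alt[of f] sum_distrib_left smult_monom[symmetric]
       mult.assoc)
qed

lemma tmult_const_right:
  fixes f g h :: "'k poly" and a c :: 'k
  shows "c \<in> Fq q \<Longrightarrow> tmult q f [:c:] = [:c:] * f"
proof -
  assume c: "c \<in> Fq q"
  have "tmult q f [:c:] = (\<Sum>i\<le>degree f. monom (coeff f i) i) * [:c:]"
    by (simp only: tmult_alt mp_const[OF c] sum_distrib_right)
  then show ?thesis by (simp add: poly_as_sum_of_monoms mult.commute)
qed

lemma tmult_smult_right:
  fixes f g h :: "'k poly" and a c :: 'k
  shows "c \<in> Fq q \<Longrightarrow> tmult q f ([:c:] * g) = [:c:] * tmult q f g"
proof -
  assume c: "c \<in> Fq q"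
  have "mp i ([:c:] * g) = [:c:] * mp i g" for i by (simp only: mp_mult mp_const[OF c])
  then show ?thesis unfolding tmult_alt[of f] sum_distrib_left by (simp only: mult_ac)
qed

end


context tw begin

abbreviation tm :: "'k poly mat \<Rightarrow> 'k poly mat \<Rightarrow> 'k poly mat" where
  "tm A B \<equiv> tmat_mult q A B"

lemma tm_dim[simp]: "dim_row (tm A B) = dim_row A" "dim_col (tm A B) = dim_col B"
  unfolding tmat_mult_def by auto

lemma tm_index[simp]: "i < dim_row A \<Longrightarrow> j < dim_col B \<Longrightarrow>
   tm A B $$ (i,j) = (\<Sum>k<dim_col A. tmult q (A $$ (i,k)) (B $$ (k,j)))"
  unfolding tmat_mult_def by auto

lemma tm_carrier[simp,intro]: "A \<in> carrier_mat n m \<Longrightarrow> B \<in> carrier_mat m' l \<Longrightarrow> tm A B \<in> carrier_mat n l"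
  by auto

lemma tm_assoc:
  assumes "A \<in> carrier_mat n m" "B \<in> carrier_mat m l" "C \<in> carrier_mat l k"
  shows "tm (tm A B) C = tm A (tm B C)"
proof (rule eq_matI)
  fix i j assume ij: "i < dim_row (tm A (tm B C))" "j < dim_col (tm A (tm B C))"
  have "tm (tm A B) C $$ (i, j) = (\<Sum>k'<l. \<Sum>k<m. tmult q (A $$ (i,k)) (tmult q (B $$ (k,k')) (C $$ (k',j))))"
    using assms ij by (simp add: tmult_sum_left tmult_assoc)
  also have "\<dots> = (\<Sum>k<m. \<Sum>k'<l. tmult q (A $$ (i,k)) (tmult q (B $$ (k,k')) (C $$ (k',j))))"
    by (rule sum.swap)
  also have "\<dots> = tm A (tm B C) $$ (i, j)"
    using assms ij by (simp add: tmult_sum_right)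
  finally show "tm (tm A B) C $$ (i, j) = tm A (tm B C) $$ (i, j)" .
qed (use assms in auto)

lemma tm_add_left:
  assumes "A \<in> carrier_mat n m" "B \<in> carrier_mat n m" "C \<in> carrier_mat m l"
  shows "tm (A + B) C = tm A C + tm B C"
  by (rule eq_matI) (use assms in \<open>auto simp: tmult_add_left sum.distrib\<close>)

lemma tm_add_right:
  assumes "A \<in> carrier_mat n m" "B \<in> carrier_mat m l" "C \<in> carrier_mat m l"
  shows "tm A (B + C) = tm A B + tm A C"
  by (rule eq_matI) (use assms in \<open>auto simp: tmult_add_right sum.distrib\<close>)

lemma tmult_if_left: "tmult q (if b then 1 else 0) (x::'k poly) = (if b then x else 0)" by simp
lemma tmult_if_right: "tmult q (x::'k poly) (if b then 1 else 0) = (if b then x else 0)" by simp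
lemma smult_sum_r: "Polynomial.smult c (sum f A) = (\<Sum>i\<in>A. Polynomial.smult c (f i))"
  by (induction A rule: infinite_finite_induct) (auto simp: smult_add_right)
lemma tmult_smult_left': "tmult q (Polynomial.smult c (f::'k poly)) g = Polynomial.smult c (tmult q f g)"
  using tmult_smult_left[of c f g] by simp
lemma tmult_smult_right': "c \<in> Fq q \<Longrightarrow> tmult q (f::'k poly) (Polynomial.smult c g) = Polynomial.smult c (tmult q f g)"
  using tmult_smult_right[of c f g] by simp

lemma tm_one_left:
  assumes "A \<in> carrier_mat n m"
  shows "tm (1\<^sub>m n) A = A"
proof (rule eq_matI)
  fix i j assume ij: "i < dim_row A" "j < dim_col A"
  have "tm (1\<^sub>m n) A $$ (i, j) = (\<Sum>k<n. if i = k then A $$ (k,j) else 0)"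
    using assms ij by (auto intro!: sum.cong simp: tmult_if_left)
  also have "\<dots> = A $$ (i,j)" using ij assms by simp
  finally show "tm (1\<^sub>m n) A $$ (i, j) = A $$ (i,j)" .
qed (use assms in auto)

lemma tm_one_right:
  assumes "A \<in> carrier_mat n m"
  shows "tm A (1\<^sub>m m) = A"
proof (rule eq_matI)
  fix i j assume ij: "i < dim_row A" "j < dim_col A"
  have "tm A (1\<^sub>m m) $$ (i, j) = (\<Sum>k<m. if k = j then A $$ (i,k) else 0)"
    using assms ij by (auto intro!: sum.cong simp: tmult_if_right)
  also have "\<dots> = A $$ (i,j)" using ij assms by simp
  finally show "tm A (1\<^sub>m m) $$ (i, j) = A $$ (i,j)" .
qed (use assms in auto)

lemma tm_zero_left:
  assumes "B \<in> carrier_mat m l"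
  shows "tm (0\<^sub>m n m) B = 0\<^sub>m n l"
  by (rule eq_matI) (use assms in auto)

lemma tm_zero_right:
  assumes "A \<in> carrier_mat n m"
  shows "tm A (0\<^sub>m m l) = 0\<^sub>m n l"
  by (rule eq_matI) (use assms in auto)

lemma tm_smult_left:
  assumes "A \<in> carrier_mat n m" "B \<in> carrier_mat m l"
  shows "tm ([:c:] \<cdot>\<^sub>m A) B = [:c:] \<cdot>\<^sub>m tm A B"
  by (rule eq_matI) (use assms in \<open>auto simp: tmult_smult_left' smult_sum_r\<close>)

lemma tm_smult_right:
  assumes "A \<in> carrier_mat n m" "B \<in> carrier_mat m l" "c \<in> Fq q"
  shows "tm A ([:c:] \<cdot>\<^sub>m B) = [:c:] \<cdot>\<^sub>m tm A B"
  by (rule eq_matI) (use assms in \<open>auto simp: tmult_smult_right' smult_sum_r\<close>)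

lemma sum_split_add: "(\<Sum>k<a+b. f k) = (\<Sum>k<a. f k) + (\<Sum>k<b. f (a + k))" for f :: "nat \<Rightarrow> 'b::comm_monoid_add"
  by (induction b) (auto simp: add.assoc)

lemma tm_four_block:
  assumes A1: "A1 \<in> carrier_mat n1 m1" and B1: "B1 \<in> carrier_mat n1 m2"
    and C1: "C1 \<in> carrier_mat n2 m1" and D1: "D1 \<in> carrier_mat n2 m2"
    and A2: "A2 \<in> carrier_mat m1 k1" and B2: "B2 \<in> carrier_mat m1 k2"
    and C2: "C2 \<in> carrier_mat m2 k1" and D2: "D2 \<in> carrier_mat m2 k2"
  shows "tm (four_block_mat A1 B1 C1 D1) (four_block_mat A2 B2 C2 D2)
    = four_block_mat (tm A1 A2 + tm B1 C2) (tm A1 B2 + tm B1 D2)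
        (tm C1 A2 + tm D1 C2) (tm C1 B2 + tm D1 D2)"
proof (rule eq_matI)
  let ?F1 = "four_block_mat A1 B1 C1 D1" and ?F2 = "four_block_mat A2 B2 C2 D2"
  fix i j assume ij: "i < dim_row (four_block_mat (tm A1 A2 + tm B1 C2) (tm A1 B2 + tm B1 D2)
        (tm C1 A2 + tm D1 C2) (tm C1 B2 + tm D1 D2))"
     "j < dim_col (four_block_mat (tm A1 A2 + tm B1 C2) (tm A1 B2 + tm B1 D2)
        (tm C1 A2 + tm D1 C2) (tm C1 B2 + tm D1 D2))"
  then have i: "i < n1 + n2" and j: "j < k1 + k2" using assms by auto
  note dims = carrier_matD[OF A1] carrier_matD[OF B1] carrier_matD[OF C1] carrier_matD[OF D1]
    carrier_matD[OF A2] carrier_matD[OF B2] carrier_matD[OF C2] carrier_matD[OF D2]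
  have F1a: "k < m1 \<Longrightarrow> ?F1 $$ (i,k) = (if i < n1 then A1 $$ (i,k) else C1 $$ (i - n1, k))" for k
    using i dims by simp
  have F1b: "k < m2 \<Longrightarrow> ?F1 $$ (i,m1 + k) = (if i < n1 then B1 $$ (i,k) else D1 $$ (i - n1, k))" for k
    using i dims by simp
  have F2a: "k < m1 \<Longrightarrow> ?F2 $$ (k,j) = (if j < k1 then A2 $$ (k,j) else B2 $$ (k, j - k1))" for k
    using j dims by simp
  have F2b: "k < m2 \<Longrightarrow> ?F2 $$ (m1 + k,j) = (if j < k1 then C2 $$ (k,j) else D2 $$ (k, j - k1))" for k
    using j dims by simp
  have "tm ?F1 ?F2 $$ (i,j) = (\<Sum>k<m1. tmult q (?F1 $$ (i,k)) (?F2 $$ (k,j)))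
       + (\<Sum>k<m2. tmult q (?F1 $$ (i,m1+k)) (?F2 $$ (m1+k,j)))"
    using i j dims by (simp add: sum_split_add)
  also have "\<dots> = (\<Sum>k<m1. tmult q (if i < n1 then A1 $$ (i,k) else C1 $$ (i - n1, k))
                                 (if j < k1 then A2 $$ (k,j) else B2 $$ (k, j - k1)))
       + (\<Sum>k<m2. tmult q (if i < n1 then B1 $$ (i,k) else D1 $$ (i - n1, k))
                                 (if j < k1 then C2 $$ (k,j) else D2 $$ (k, j - k1)))"
    by (intro arg_cong2[where f="(+)"] sum.cong refl) (simp_all add: F1a F1b F2a F2b)
  also have "\<dots> = four_block_mat (tm A1 A2 + tm B1 C2) (tm A1 B2 + tm B1 D2)
        (tm C1 A2 + tm D1 C2) (tm C1 B2 + tm D1 D2) $$ (i, j)"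
  proof (cases "i < n1"; cases "j < k1")
    assume c: "i < n1" "j < k1"
    have "four_block_mat (tm A1 A2 + tm B1 C2) (tm A1 B2 + tm B1 D2)
        (tm C1 A2 + tm D1 C2) (tm C1 B2 + tm D1 D2) $$ (i, j) = (tm A1 A2 + tm B1 C2) $$ (i,j)"
      using c i j dims by simp
    also have "\<dots> = tm A1 A2 $$ (i,j) + tm B1 C2 $$ (i,j)" using c i j dims by simp
    also have "\<dots> = (\<Sum>k<m1. tmult q (A1 $$ (i,k)) (A2 $$ (k,j))) + (\<Sum>k<m2. tmult q (B1 $$ (i,k)) (C2 $$ (k,j)))"
      using c i j dims by simp
    finally show ?thesis using c by simp
  next
    assume c: "i < n1" "\<not> j < k1"
    have "four_block_mat (tm A1 A2 + tm B1 C2) (tm A1 B2 + tm B1 D2)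
        (tm C1 A2 + tm D1 C2) (tm C1 B2 + tm D1 D2) $$ (i, j) = (tm A1 B2 + tm B1 D2) $$ (i,j - k1)"
      using c i j dims by simp
    also have "\<dots> = tm A1 B2 $$ (i,j - k1) + tm B1 D2 $$ (i,j - k1)" using c i j dims by simp
    also have "\<dots> = (\<Sum>k<m1. tmult q (A1 $$ (i,k)) (B2 $$ (k,j - k1))) + (\<Sum>k<m2. tmult q (B1 $$ (i,k)) (D2 $$ (k,j - k1)))"
      using c i j dims by simp
    finally show ?thesis using c by simp
  next
    assume c: "\<not> i < n1" "j < k1"
    have "four_block_mat (tm A1 A2 + tm B1 C2) (tm A1 B2 + tm B1 D2)
        (tm C1 A2 + tm D1 C2) (tm C1 B2 + tm D1 D2) $$ (i, j) = (tm C1 A2 + tm D1 C2) $$ (i - n1,j)"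
      using c i j dims by simp
    also have "\<dots> = tm C1 A2 $$ (i - n1,j) + tm D1 C2 $$ (i - n1,j)" using c i j dims by simp
    also have "\<dots> = (\<Sum>k<m1. tmult q (C1 $$ (i - n1,k)) (A2 $$ (k,j))) + (\<Sum>k<m2. tmult q (D1 $$ (i - n1,k)) (C2 $$ (k,j)))"
      using c i j dims by simp
    finally show ?thesis using c by simp
  next
    assume c: "\<not> i < n1" "\<not> j < k1"
    have "four_block_mat (tm A1 A2 + tm B1 C2) (tm A1 B2 + tm B1 D2)
        (tm C1 A2 + tm D1 C2) (tm C1 B2 + tm D1 D2) $$ (i, j) = (tm C1 B2 + tm D1 D2) $$ (i - n1,j - k1)"
      using c i j dims by simp
    also have "\<dots> = tm C1 B2 $$ (i - n1,j - k1) + tm D1 D2 $$ (i - n1,j - k1)" using c i j dims by simp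
    also have "\<dots> = (\<Sum>k<m1. tmult q (C1 $$ (i - n1,k)) (B2 $$ (k,j - k1))) + (\<Sum>k<m2. tmult q (D1 $$ (i - n1,k)) (D2 $$ (k,j - k1)))"
      using c i j dims by simp
    finally show ?thesis using c by simp
  qed
  finally show "tm ?F1 ?F2 $$ (i, j) = four_block_mat (tm A1 A2 + tm B1 C2) (tm A1 B2 + tm B1 D2)
        (tm C1 A2 + tm D1 C2) (tm C1 B2 + tm D1 D2) $$ (i, j)" .
qed (use assms in auto)



lemma fb_collapse:
  assumes "A \<in> carrier_mat n m" "B \<in> carrier_mat n 0" "C \<in> carrier_mat 0 m" "D \<in> carrier_mat 0 0"
  shows "four_block_mat A B C D = A"
  by (rule eq_matI) (use assms in auto)

lemma fb_inj:
  assumes "A \<in> carrier_mat n1 m1" "B \<in> carrier_mat n1 m2" "C \<in> carrier_mat n2 m1" "D \<in> carrier_mat n2 m2"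
   "A' \<in> carrier_mat n1 m1" "B' \<in> carrier_mat n1 m2" "C' \<in> carrier_mat n2 m1" "D' \<in> carrier_mat n2 m2"
   and eq: "four_block_mat A B C D = four_block_mat A' B' C' D'"
  shows "A = A' \<and> B = B' \<and> C = C' \<and> D = D'"
proof (intro conjI)
  note dims = carrier_matD[OF assms(1)] carrier_matD[OF assms(2)] carrier_matD[OF assms(3)]
    carrier_matD[OF assms(4)] carrier_matD[OF assms(5)] carrier_matD[OF assms(6)]
    carrier_matD[OF assms(7)] carrier_matD[OF assms(8)]
  show "A = A'"
  proof (rule eq_matI)
    fix i j assume ij: "i < dim_row A'" "j < dim_col A'"
    have "A $$ (i,j) = four_block_mat A B C D $$ (i,j)" using ij dims by simp
    also have "\<dots> = A' $$ (i,j)" unfolding eq using ij dims by simp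
    finally show "A $$ (i,j) = A' $$ (i,j)" .
  qed (use dims in auto)
  show "B = B'"
  proof (rule eq_matI)
    fix i j assume ij: "i < dim_row B'" "j < dim_col B'"
    have "B $$ (i,j) = four_block_mat A B C D $$ (i,j + m1)" using ij dims by simp
    also have "\<dots> = B' $$ (i,j)" unfolding eq using ij dims by simp
    finally show "B $$ (i,j) = B' $$ (i,j)" .
  qed (use dims in auto)
  show "C = C'"
  proof (rule eq_matI)
    fix i j assume ij: "i < dim_row C'" "j < dim_col C'"
    have "C $$ (i,j) = four_block_mat A B C D $$ (i + n1,j)" using ij dims by simp
    also have "\<dots> = C' $$ (i,j)" unfolding eq using ij dims by simp
    finally show "C $$ (i,j) = C' $$ (i,j)" .
  qed (use dims in auto)
  show "D = D'"
  proof (rule eq_matI)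
    fix i j assume ij: "i < dim_row D'" "j < dim_col D'"
    have "D $$ (i,j) = four_block_mat A B C D $$ (i + n1,j + m1)" using ij dims by simp
    also have "\<dots> = D' $$ (i,j)" unfolding eq using ij dims by simp
    finally show "D $$ (i,j) = D' $$ (i,j)" .
  qed (use dims in auto)
qed

end

lemma empty_rows_eq: "A \<in> carrier_mat 0 m \<Longrightarrow> B \<in> carrier_mat 0 m \<Longrightarrow> A = B"
  by (rule eq_matI) auto
lemma empty_cols_eq: "A \<in> carrier_mat n 0 \<Longrightarrow> B \<in> carrier_mat n 0 \<Longrightarrow> A = B"
  by (rule eq_matI) auto

lemma split_rows:
  assumes "A \<in> carrier_mat (n1 + n2) m"
  shows "\<exists>A1 A2. A1 \<in> carrier_mat n1 m \<and> A2 \<in> carrier_mat n2 m \<and>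
     A = four_block_mat A1 (0\<^sub>m n1 0) A2 (0\<^sub>m n2 0)"
proof -
  obtain A1 A2 A3 A4 where s: "split_block A n1 m = (A1,A2,A3,A4)" by (cases "split_block A n1 m") auto
  have d: "dim_row A = n1 + n2" "dim_col A = m + 0" using assms by auto
  note sb = split_block[OF s d]
  have "A2 = 0\<^sub>m n1 0" by (rule empty_cols_eq) (use sb in auto)
  moreover have "A4 = 0\<^sub>m n2 0" by (rule empty_cols_eq) (use sb in auto)
  ultimately show ?thesis using sb by blast
qed

lemma split_cols:
  assumes "A \<in> carrier_mat n (m1 + m2)"
  shows "\<exists>A1 A2. A1 \<in> carrier_mat n m1 \<and> A2 \<in> carrier_mat n m2 \<and>
     A = four_block_mat A1 A2 (0\<^sub>m 0 m1) (0\<^sub>m 0 m2)"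
proof -
  obtain A1 A2 A3 A4 where s: "split_block A n m1 = (A1,A2,A3,A4)" by (cases "split_block A n m1") auto
  have d: "dim_row A = n + 0" "dim_col A = m1 + m2" using assms by auto
  note sb = split_block[OF s d]
  have "A3 = 0\<^sub>m 0 m1" by (rule empty_rows_eq) (use sb in auto)
  moreover have "A4 = 0\<^sub>m 0 m2" by (rule empty_rows_eq) (use sb in auto)
  ultimately show ?thesis using sb by blast
qed



lemma mat_double_zero:
  fixes M :: "'a::ab_group_add mat"
  assumes "M \<in> carrier_mat n m" "M = M + M"
  shows "M = 0\<^sub>m n m"
proof (rule eq_matI)
  fix i j assume ij: "i < dim_row (0\<^sub>m n m)" "j < dim_col (0\<^sub>m n m)"
  have "M $$ (i,j) = (M + M) $$ (i,j)" using assms(2) by simp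
  also have "\<dots> = M $$ (i,j) + M $$ (i,j)" using ij assms(1) by simp
  finally show "M $$ (i,j) = 0\<^sub>m n m $$ (i,j)" using ij by simp
qed (use assms in auto)

lemma pow_mat_add:
  fixes A :: "'a::semiring_1 mat"
  assumes "A \<in> carrier_mat n n"
  shows "A ^\<^sub>m (i + j) = A ^\<^sub>m i * A ^\<^sub>m j"
proof (induction j)
  case 0 then show ?case using assms by simp
next
  case (Suc j)
  have "A ^\<^sub>m (i + Suc j) = A ^\<^sub>m (i + j) * A" by simp
  also have "\<dots> = (A ^\<^sub>m i * A ^\<^sub>m j) * A" using Suc by simp
  also have "\<dots> = A ^\<^sub>m i * (A ^\<^sub>m j * A)"
    by (rule assoc_mult_mat[of _ n n _ n _ n]) (use assms in auto)
  finally show ?case by simp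
qed

lemma pow_mat_zero_ge:
  fixes A :: "'a::semiring_1 mat"
  assumes "A \<in> carrier_mat n n" "A ^\<^sub>m a = 0\<^sub>m n n"
  shows "A ^\<^sub>m (a + j) = 0\<^sub>m n n"
  using pow_mat_add[OF assms(1), of a j] assms by simp

lemma pow_lower_block:
  fixes A :: "'a::comm_ring_1 mat"
  assumes A: "A \<in> carrier_mat n n" and C: "C \<in> carrier_mat m n" and D: "D \<in> carrier_mat m m"
  shows "\<exists>E \<in> carrier_mat m n. four_block_mat A (0\<^sub>m n m) C D ^\<^sub>m k
     = four_block_mat (A ^\<^sub>m k) (0\<^sub>m n m) E (D ^\<^sub>m k)"
proof (induction k)
  case 0
  show ?case using A D by (intro bexI[of _ "0\<^sub>m m n"]) auto
next
  case (Suc k)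
  then obtain E where E: "E \<in> carrier_mat m n"
    and eq: "four_block_mat A (0\<^sub>m n m) C D ^\<^sub>m k = four_block_mat (A ^\<^sub>m k) (0\<^sub>m n m) E (D ^\<^sub>m k)" by blast
  have "four_block_mat A (0\<^sub>m n m) C D ^\<^sub>m Suc k
     = four_block_mat (A ^\<^sub>m k) (0\<^sub>m n m) E (D ^\<^sub>m k) * four_block_mat A (0\<^sub>m n m) C D"
    using eq by simp
  also have "\<dots> = four_block_mat (A ^\<^sub>m k * A + 0\<^sub>m n m * C) (A ^\<^sub>m k * 0\<^sub>m n m + 0\<^sub>m n m * D)
      (E * A + D ^\<^sub>m k * C) (E * 0\<^sub>m n m + D ^\<^sub>m k * D)"
    by (rule mult_four_block_mat) (use A C D E in auto)
  also have "\<dots> = four_block_mat (A ^\<^sub>m Suc k) (0\<^sub>m n m) (E * A + D ^\<^sub>m k * C) (D ^\<^sub>m Suc k)"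
    using A C D E by (intro cong_four_block_mat) auto
  finally show ?case using A C D E by (intro bexI[of _ "E * A + D ^\<^sub>m k * C"]) auto
qed

lemma nilp_lower_block:
  fixes A :: "'a::comm_ring_1 mat"
  assumes A: "A \<in> carrier_mat n n" and C: "C \<in> carrier_mat m n" and D: "D \<in> carrier_mat m m"
    and nA: "A ^\<^sub>m a = 0\<^sub>m n n" and nD: "D ^\<^sub>m b = 0\<^sub>m m m"
  shows "\<exists>k. four_block_mat A (0\<^sub>m n m) C D ^\<^sub>m k = 0\<^sub>m (n + m) (n + m)"
proof -
  let ?M = "four_block_mat A (0\<^sub>m n m) C D"
  have M: "?M \<in> carrier_mat (n + m) (n + m)" using A D by auto
  obtain E where E: "E \<in> carrier_mat m n"
    and eq: "?M ^\<^sub>m (a + b) = four_block_mat (A ^\<^sub>m (a + b)) (0\<^sub>m n m) E (D ^\<^sub>m (a + b))"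
    using pow_lower_block[OF A C D] by blast
  have "A ^\<^sub>m (a + b) = 0\<^sub>m n n" using pow_mat_zero_ge[OF A nA] .
  moreover have "D ^\<^sub>m (a + b) = 0\<^sub>m m m" using pow_mat_zero_ge[OF D nD, of a] by (simp add: add.commute)
  ultimately have eq2: "?M ^\<^sub>m (a + b) = four_block_mat (0\<^sub>m n n) (0\<^sub>m n m) E (0\<^sub>m m m)" using eq by simp
  have "?M ^\<^sub>m ((a + b) + (a + b)) = ?M ^\<^sub>m (a + b) * ?M ^\<^sub>m (a + b)" by (rule pow_mat_add[OF M])
  also have "\<dots> = four_block_mat (0\<^sub>m n n * 0\<^sub>m n n + 0\<^sub>m n m * E) (0\<^sub>m n n * 0\<^sub>m n m + 0\<^sub>m n m * 0\<^sub>m m m)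
      (E * 0\<^sub>m n n + 0\<^sub>m m m * E) (E * 0\<^sub>m n m + 0\<^sub>m m m * 0\<^sub>m m m)"
    unfolding eq2 by (rule mult_four_block_mat) (use E in auto)
  also have "\<dots> = four_block_mat (0\<^sub>m n n) (0\<^sub>m n m) (0\<^sub>m m n) (0\<^sub>m m m)"
    using E by (intro cong_four_block_mat) auto
  also have "\<dots> = 0\<^sub>m (n + m) (n + m)" by simp
  finally show ?thesis by blast
qed

lemma cp_dim[simp]: "dim_row (const_part M) = dim_row M" "dim_col (const_part M) = dim_col M"
  unfolding const_part_def by auto

lemma cp_index[simp]: "i < dim_row M \<Longrightarrow> j < dim_col M \<Longrightarrow> const_part M $$ (i,j) = coeff (M $$ (i,j)) 0"
  unfolding const_part_def by auto

lemma cp_block_minus: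
  fixes A :: "'k::field poly mat"
  assumes A: "A \<in> carrier_mat n n" and C: "C \<in> carrier_mat m n" and D: "D \<in> carrier_mat m m"
  shows "const_part (four_block_mat A (0\<^sub>m n m) C D) - theta \<cdot>\<^sub>m 1\<^sub>m (n + m)
    = four_block_mat (const_part A - theta \<cdot>\<^sub>m 1\<^sub>m n) (0\<^sub>m n m) (const_part C) (const_part D - theta \<cdot>\<^sub>m 1\<^sub>m m)"
  by (rule eq_matI) (use A C D in auto)



context tw begin

lemma Fq_0[simp]: "(0::'k) \<in> Fq q" using qpos by (simp add: Fq_def)
lemma Fq_1[simp]: "(1::'k) \<in> Fq q" by (simp add: Fq_def)

lemma Aset_pCons: "a \<in> Fq q \<Longrightarrow> p \<in> Aset q \<Longrightarrow> pCons (a::'k) p \<in> Aset q"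
  unfolding Aset_def by (auto simp: coeff_pCons split: nat.splits)

lemma Aset_pConsD: "pCons (a::'k) p \<in> Aset q \<Longrightarrow> a \<in> Fq q \<and> p \<in> Aset q"
proof -
  assume h: "pCons (a::'k) p \<in> Aset q"
  have "coeff (pCons a p) 0 \<in> Fq q" using h unfolding Aset_def by blast
  moreover have "coeff (pCons a p) (Suc i) \<in> Fq q" for i using h unfolding Aset_def by blast
  ultimately show ?thesis unfolding Aset_def by simp
qed

lemma Aset_0[simp]: "(0::'k poly) \<in> Aset q" unfolding Aset_def by simp

lemma Aset_const: "c \<in> Fq q \<Longrightarrow> [:c::'k:] \<in> Aset q"
  by (intro Aset_pCons) auto

lemma Aset_1[simp]: "(1::'k poly) \<in> Aset q"
  using Aset_const[of 1] by (simp add: one_pCons)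

lemma Aset_tvar[simp]: "(tvar::'k poly) \<in> Aset q"
  unfolding tvar_def by (intro Aset_pCons Aset_const) auto

lemma alg_hom_zero:
  assumes "alg_hom_A q n (P :: 'k poly \<Rightarrow> 'k poly mat)"
  shows "P 0 = 0\<^sub>m n n"
proof (rule mat_double_zero)
  show "P 0 \<in> carrier_mat n n" using assms unfolding alg_hom_A_def by auto
  have "P (0 + 0) = P 0 + P 0" using assms unfolding alg_hom_A_def by (meson Aset_0)
  then show "P 0 = P 0 + P 0" by simp
qed

lemma der_one:
  fixes P Q L :: "'k poly \<Rightarrow> 'k poly mat"
  assumes "is_der q n1 P n2 Q L" "alg_hom_A q n1 P" "alg_hom_A q n2 Q"
  shows "L 1 = 0\<^sub>m n2 n1"
proof (rule mat_double_zero)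
  show L1: "L 1 \<in> carrier_mat n2 n1" using assms Aset_1 unfolding is_der_def by blast
  have "L (1 * 1) = tm (Q 1) (L 1) + tm (L 1) (P 1)" using assms(1) unfolding is_der_def by (meson Aset_1)
  also have "\<dots> = L 1 + L 1"
  proof -
    have "P 1 = 1\<^sub>m n1" "Q 1 = 1\<^sub>m n2" using assms(2,3) unfolding alg_hom_A_def by blast+
    then show ?thesis by (simp only: tm_one_left[OF L1] tm_one_right[OF L1])
  qed
  finally show "L 1 = L 1 + L 1" by simp
qed

lemma commute_all:
  fixes P R :: "'k poly \<Rightarrow> 'k poly mat"
  assumes P: "alg_hom_A q n P" and R: "alg_hom_A q m R"
    and g: "g \<in> carrier_mat n m" and gt: "tm g (R tvar) = tm (P tvar) g"
  shows "b \<in> Aset q \<Longrightarrow> tm g (R b) = tm (P b) g"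
proof (induction b rule: pCons_induct)
  case 0
  show ?case unfolding alg_hom_zero[OF P] alg_hom_zero[OF R] tm_zero_left[OF g] tm_zero_right[OF g] ..
next
  case (pCons a p)
  from Aset_pConsD[OF pCons.prems] have a: "a \<in> Fq q" and p: "p \<in> Aset q" by auto
  have tp: "tvar * p = pCons 0 p" unfolding tvar_def by simp
  have tpA: "tvar * p \<in> Aset q" unfolding tp by (intro Aset_pCons p) simp
  have dec: "pCons a p = [:a:] + tvar * p" unfolding tp by simp
  have a1: "[:a:] \<in> Aset q" using Aset_const[OF a] by simp
  have P1: "P [:a:] = [:a:] \<cdot>\<^sub>m 1\<^sub>m n"
  proof -
    have "P (Polynomial.smult a 1) = [:a:] \<cdot>\<^sub>m P 1" using P a Aset_1 unfolding alg_hom_A_def by blast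
    then show ?thesis using P unfolding alg_hom_A_def by simp
  qed
  have R1: "R [:a:] = [:a:] \<cdot>\<^sub>m 1\<^sub>m m"
  proof -
    have "R (Polynomial.smult a 1) = [:a:] \<cdot>\<^sub>m R 1" using R a Aset_1 unfolding alg_hom_A_def by blast
    then show ?thesis using R unfolding alg_hom_A_def by simp
  qed
  have Pb: "P (pCons a p) = [:a:] \<cdot>\<^sub>m 1\<^sub>m n + tm (P tvar) (P p)"
  proof -
    have "P (pCons a p) = P [:a:] + P (tvar * p)" unfolding dec using P a1 tpA unfolding alg_hom_A_def by blast
    also have "P (tvar * p) = tm (P tvar) (P p)" using P p Aset_tvar unfolding alg_hom_A_def by blast
    finally show ?thesis unfolding P1 .
  qed
  have Rb: "R (pCons a p) = [:a:] \<cdot>\<^sub>m 1\<^sub>m m + tm (R tvar) (R p)"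
  proof -
    have "R (pCons a p) = R [:a:] + R (tvar * p)" unfolding dec using R a1 tpA unfolding alg_hom_A_def by blast
    also have "R (tvar * p) = tm (R tvar) (R p)" using R p Aset_tvar unfolding alg_hom_A_def by blast
    finally show ?thesis unfolding R1 .
  qed
  have Pc: "P tvar \<in> carrier_mat n n" "P p \<in> carrier_mat n n" using P p unfolding alg_hom_A_def by auto
  have Rc: "R tvar \<in> carrier_mat m m" "R p \<in> carrier_mat m m" using R p unfolding alg_hom_A_def by auto
  have IH: "tm g (R p) = tm (P p) g" using pCons.IH p by simp
  have e1: "tm g (R (pCons a p)) = tm g ([:a:] \<cdot>\<^sub>m 1\<^sub>m m) + tm g (tm (R tvar) (R p))"
    unfolding Rb by (rule tm_add_right[OF g]) (use Rc in auto)
  have e2: "tm g ([:a:] \<cdot>\<^sub>m 1\<^sub>m m) = [:a:] \<cdot>\<^sub>m g"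
    by (simp only: tm_smult_right[OF g one_carrier_mat a] tm_one_right[OF g])
  have e3: "tm g (tm (R tvar) (R p)) = tm (tm g (R tvar)) (R p)" by (rule tm_assoc[OF g Rc, symmetric])
  have e4: "tm (tm g (R tvar)) (R p) = tm (P tvar) (tm g (R p))" unfolding gt by (rule tm_assoc[OF Pc(1) g Rc(2)])
  have e5: "tm (P tvar) (tm g (R p)) = tm (tm (P tvar) (P p)) g" unfolding IH by (rule tm_assoc[OF Pc g, symmetric])
  have e6: "tm ([:a:] \<cdot>\<^sub>m 1\<^sub>m n) g = [:a:] \<cdot>\<^sub>m g"
    by (simp only: tm_smult_left[OF one_carrier_mat g] tm_one_left[OF g])
  have e7: "tm (P (pCons a p)) g = tm ([:a:] \<cdot>\<^sub>m 1\<^sub>m n) g + tm (tm (P tvar) (P p)) g"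
    unfolding Pb by (rule tm_add_left[OF _ _ g]) (use Pc in auto)
  show ?case unfolding e1 e2 e3 e4 e5 e7 e6 ..
qed

end


context tw begin

lemma der_ext_tmodule:
  fixes P Q L :: "'k poly \<Rightarrow> 'k poly mat"
  assumes P: "tmodule q theta n1 P" and Q: "tmodule q theta n2 Q" and L: "is_der q n1 P n2 Q L"
  shows "tmodule q theta (n1 + n2) (\<lambda>a. four_block_mat (P a) (0\<^sub>m n1 n2) (L a) (Q a))"
proof -
  have PA: "alg_hom_A q n1 P" and QA: "alg_hom_A q n2 Q" using P Q unfolding tmodule_def by blast+
  have Pc: "\<And>a. a \<in> Aset q \<Longrightarrow> P a \<in> carrier_mat n1 n1" using PA unfolding alg_hom_A_def by blast
  have Qc: "\<And>a. a \<in> Aset q \<Longrightarrow> Q a \<in> carrier_mat n2 n2" using QA unfolding alg_hom_A_def by blast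
  have Lc: "\<And>a. a \<in> Aset q \<Longrightarrow> L a \<in> carrier_mat n2 n1" using L unfolding is_der_def by blast
  have Padd: "\<And>a b. a \<in> Aset q \<Longrightarrow> b \<in> Aset q \<Longrightarrow> P (a + b) = P a + P b" using PA unfolding alg_hom_A_def by blast
  have Qadd: "\<And>a b. a \<in> Aset q \<Longrightarrow> b \<in> Aset q \<Longrightarrow> Q (a + b) = Q a + Q b" using QA unfolding alg_hom_A_def by blast
  have Ladd: "\<And>a b. a \<in> Aset q \<Longrightarrow> b \<in> Aset q \<Longrightarrow> L (a + b) = L a + L b" using L unfolding is_der_def by blast
  have Psm: "\<And>c a. c \<in> Fq q \<Longrightarrow> a \<in> Aset q \<Longrightarrow> P (Polynomial.smult c a) = [:c:] \<cdot>\<^sub>m P a" using PA unfolding alg_hom_A_def by blast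
  have Qsm: "\<And>c a. c \<in> Fq q \<Longrightarrow> a \<in> Aset q \<Longrightarrow> Q (Polynomial.smult c a) = [:c:] \<cdot>\<^sub>m Q a" using QA unfolding alg_hom_A_def by blast
  have Lsm: "\<And>c a. c \<in> Fq q \<Longrightarrow> a \<in> Aset q \<Longrightarrow> L (Polynomial.smult c a) = [:c:] \<cdot>\<^sub>m L a" using L unfolding is_der_def by blast
  have Pmul: "\<And>a b. a \<in> Aset q \<Longrightarrow> b \<in> Aset q \<Longrightarrow> P (a * b) = tm (P a) (P b)" using PA unfolding alg_hom_A_def by blast
  have Qmul: "\<And>a b. a \<in> Aset q \<Longrightarrow> b \<in> Aset q \<Longrightarrow> Q (a * b) = tm (Q a) (Q b)" using QA unfolding alg_hom_A_def by blast
  have Lmul: "\<And>a b. a \<in> Aset q \<Longrightarrow> b \<in> Aset q \<Longrightarrow> L (a * b) = tm (Q a) (L b) + tm (L a) (P b)" using L unfolding is_der_def by blast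
  have P1: "P 1 = 1\<^sub>m n1" using PA unfolding alg_hom_A_def by blast
  have Q1: "Q 1 = 1\<^sub>m n2" using QA unfolding alg_hom_A_def by blast
  have L1: "L 1 = 0\<^sub>m n2 n1" by (rule der_one[OF L PA QA])
  let ?Y = "\<lambda>a. four_block_mat (P a) (0\<^sub>m n1 n2) (L a) (Q a)"
  have "alg_hom_A q (n1 + n2) ?Y"
    unfolding alg_hom_A_def
  proof (intro conjI ballI)
    fix a :: "'k poly" assume a: "a \<in> Aset q"
    show "?Y a \<in> carrier_mat (n1 + n2) (n1 + n2)" using Pc[OF a] Qc[OF a] by auto
  next
    fix a b :: "'k poly" assume a: "a \<in> Aset q" and b: "b \<in> Aset q"
    have "?Y a + ?Y b = four_block_mat (P a + P b) (0\<^sub>m n1 n2 + 0\<^sub>m n1 n2) (L a + L b) (Q a + Q b)"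
      by (rule add_four_block_mat) (use Pc[OF a] Qc[OF a] Lc[OF a] Pc[OF b] Qc[OF b] Lc[OF b] in auto)
    then show "?Y (a + b) = ?Y a + ?Y b" by (simp add: Padd[OF a b] Qadd[OF a b] Ladd[OF a b])
  next
    fix c :: 'k and a :: "'k poly" assume c: "c \<in> Fq q" and a: "a \<in> Aset q"
    have "[:c:] \<cdot>\<^sub>m ?Y a = four_block_mat ([:c:] \<cdot>\<^sub>m P a) ([:c:] \<cdot>\<^sub>m 0\<^sub>m n1 n2) ([:c:] \<cdot>\<^sub>m L a) ([:c:] \<cdot>\<^sub>m Q a)"
      by (rule smult_four_block_mat) (use Pc[OF a] Qc[OF a] Lc[OF a] in auto)
    then show "?Y (Polynomial.smult c a) = [:c:] \<cdot>\<^sub>m ?Y a" by (simp add: Psm[OF c a] Qsm[OF c a] Lsm[OF c a])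
  next
    fix a b :: "'k poly" assume a: "a \<in> Aset q" and b: "b \<in> Aset q"
    note ca = Pc[OF a] Qc[OF a] Lc[OF a] and cb = Pc[OF b] Qc[OF b] Lc[OF b]
    have "tm (?Y a) (?Y b) = four_block_mat (tm (P a) (P b) + tm (0\<^sub>m n1 n2) (L b))
       (tm (P a) (0\<^sub>m n1 n2) + tm (0\<^sub>m n1 n2) (Q b))
       (tm (L a) (P b) + tm (Q a) (L b)) (tm (L a) (0\<^sub>m n1 n2) + tm (Q a) (Q b))"
      by (rule tm_four_block) (use ca cb in auto)
    also have "\<dots> = four_block_mat (tm (P a) (P b)) (0\<^sub>m n1 n2) (tm (Q a) (L b) + tm (L a) (P b)) (tm (Q a) (Q b))"
    proof (rule cong_four_block_mat)
      show "tm (P a) (P b) + tm (0\<^sub>m n1 n2) (L b) = tm (P a) (P b)"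
        unfolding tm_zero_left[OF Lc[OF b]] by (rule right_add_zero_mat) (use ca cb in auto)
      show "tm (P a) (0\<^sub>m n1 n2) + tm (0\<^sub>m n1 n2) (Q b) = 0\<^sub>m n1 n2"
        unfolding tm_zero_left[OF Qc[OF b]] tm_zero_right[OF Pc[OF a]] by simp
      show "tm (L a) (P b) + tm (Q a) (L b) = tm (Q a) (L b) + tm (L a) (P b)"
        by (rule comm_add_mat) (use ca cb in auto)
      show "tm (L a) (0\<^sub>m n1 n2) + tm (Q a) (Q b) = tm (Q a) (Q b)"
        unfolding tm_zero_right[OF Lc[OF a]] by (rule left_add_zero_mat) (use ca cb in auto)
    qed
    finally show "?Y (a * b) = tm (?Y a) (?Y b)" by (simp add: Pmul[OF a b] Qmul[OF a b] Lmul[OF a b])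
  next
    show "?Y 1 = 1\<^sub>m (n1 + n2)" unfolding P1 Q1 L1 by simp
  qed
  moreover have "\<exists>k. (const_part (?Y tvar) - theta \<cdot>\<^sub>m 1\<^sub>m (n1 + n2)) ^\<^sub>m k = 0\<^sub>m (n1 + n2) (n1 + n2)"
  proof -
    have t: "(tvar::'k poly) \<in> Aset q" by simp
    obtain a where na: "(const_part (P tvar) - theta \<cdot>\<^sub>m 1\<^sub>m n1) ^\<^sub>m a = 0\<^sub>m n1 n1"
      using P unfolding tmodule_def by blast
    obtain b where nb: "(const_part (Q tvar) - theta \<cdot>\<^sub>m 1\<^sub>m n2) ^\<^sub>m b = 0\<^sub>m n2 n2"
      using Q unfolding tmodule_def by blast
    have e: "const_part (?Y tvar) - theta \<cdot>\<^sub>m 1\<^sub>m (n1 + n2) =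
      four_block_mat (const_part (P tvar) - theta \<cdot>\<^sub>m 1\<^sub>m n1) (0\<^sub>m n1 n2) (const_part (L tvar))
         (const_part (Q tvar) - theta \<cdot>\<^sub>m 1\<^sub>m n2)"
      by (rule cp_block_minus[OF Pc[OF t] Lc[OF t] Qc[OF t]])
    have c1: "const_part (P tvar) - theta \<cdot>\<^sub>m 1\<^sub>m n1 \<in> carrier_mat n1 n1" using Pc[OF t] by auto
    have c2: "const_part (L tvar) \<in> carrier_mat n2 n1" using Lc[OF t] by auto
    have c3: "const_part (Q tvar) - theta \<cdot>\<^sub>m 1\<^sub>m n2 \<in> carrier_mat n2 n2" using Qc[OF t] by auto
    show ?thesis unfolding e by (rule nilp_lower_block[OF c1 c2 c3 na nb])
  qed
  ultimately show ?thesis unfolding tmodule_def by blast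
qed

lemma der_comp_right:
  fixes Phi Psi Xi delta :: "'k poly \<Rightarrow> 'k poly mat"
  assumes D: "is_der q d Phi e Psi delta" and PhiA: "alg_hom_A q d Phi" and PsiA: "alg_hom_A q e Psi"
    and XiA: "alg_hom_A q r Xi" and g: "g \<in> carrier_mat d r" and gt: "tm g (Xi tvar) = tm (Phi tvar) g"
  shows "is_der q r Xi e Psi (\<lambda>a. tm (delta a) g)"
proof -
  have Pc: "\<And>a. a \<in> Aset q \<Longrightarrow> Phi a \<in> carrier_mat d d" using PhiA unfolding alg_hom_A_def by blast
  have Qc: "\<And>a. a \<in> Aset q \<Longrightarrow> Psi a \<in> carrier_mat e e" using PsiA unfolding alg_hom_A_def by blast
  have Xc: "\<And>a. a \<in> Aset q \<Longrightarrow> Xi a \<in> carrier_mat r r" using XiA unfolding alg_hom_A_def by blast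
  have Lc: "\<And>a. a \<in> Aset q \<Longrightarrow> delta a \<in> carrier_mat e d" using D unfolding is_der_def by blast
  have Ladd: "\<And>a b. a \<in> Aset q \<Longrightarrow> b \<in> Aset q \<Longrightarrow> delta (a + b) = delta a + delta b" using D unfolding is_der_def by blast
  have Lsm: "\<And>c a. c \<in> Fq q \<Longrightarrow> a \<in> Aset q \<Longrightarrow> delta (Polynomial.smult c a) = [:c:] \<cdot>\<^sub>m delta a" using D unfolding is_der_def by blast
  have Lmul: "\<And>a b. a \<in> Aset q \<Longrightarrow> b \<in> Aset q \<Longrightarrow> delta (a * b) = tm (Psi a) (delta b) + tm (delta a) (Phi b)" using D unfolding is_der_def by blast
  have com: "\<And>b. b \<in> Aset q \<Longrightarrow> tm g (Xi b) = tm (Phi b) g" by (rule commute_all[OF PhiA XiA g gt])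
  show ?thesis unfolding is_der_def
  proof (intro conjI ballI)
    fix a :: "'k poly" assume a: "a \<in> Aset q"
    show "tm (delta a) g \<in> carrier_mat e r" using Lc[OF a] g by auto
  next
    fix a b :: "'k poly" assume a: "a \<in> Aset q" and b: "b \<in> Aset q"
    show "tm (delta (a + b)) g = tm (delta a) g + tm (delta b) g"
      unfolding Ladd[OF a b] by (rule tm_add_left[OF Lc[OF a] Lc[OF b] g])
  next
    fix c :: 'k and a :: "'k poly" assume c: "c \<in> Fq q" and a: "a \<in> Aset q"
    show "tm (delta (Polynomial.smult c a)) g = [:c:] \<cdot>\<^sub>m tm (delta a) g"
      unfolding Lsm[OF c a] by (rule tm_smult_left[OF Lc[OF a] g])
  next
    fix a b :: "'k poly" assume a: "a \<in> Aset q" and b: "b \<in> Aset q"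
    have "tm (delta (a * b)) g = tm (tm (Psi a) (delta b)) g + tm (tm (delta a) (Phi b)) g"
      unfolding Lmul[OF a b] by (rule tm_add_left[OF _ _ g]) (use Qc[OF a] Lc[OF b] Lc[OF a] Pc[OF b] in auto)
    also have "tm (tm (Psi a) (delta b)) g = tm (Psi a) (tm (delta b) g)"
      by (rule tm_assoc[OF Qc[OF a] Lc[OF b] g])
    also have "tm (tm (delta a) (Phi b)) g = tm (delta a) (tm (Phi b) g)"
      by (rule tm_assoc[OF Lc[OF a] Pc[OF b] g])
    also have "tm (Phi b) g = tm g (Xi b)" by (rule com[OF b, symmetric])
    also have "tm (delta a) (tm g (Xi b)) = tm (tm (delta a) g) (Xi b)"
      by (rule tm_assoc[OF Lc[OF a] g Xc[OF b], symmetric])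
    finally show "tm (delta (a * b)) g = tm (Psi a) (tm (delta b) g) + tm (tm (delta a) g) (Xi b)" .
  qed
qed

lemma der_comp_left:
  fixes Phi Psi Xi delta :: "'k poly \<Rightarrow> 'k poly mat"
  assumes D: "is_der q d Phi e Psi delta" and PhiA: "alg_hom_A q d Phi" and PsiA: "alg_hom_A q e Psi"
    and XiA: "alg_hom_A q r Xi" and f: "f \<in> carrier_mat r e" and ft: "tm f (Psi tvar) = tm (Xi tvar) f"
  shows "is_der q d Phi r Xi (\<lambda>a. tm f (delta a))"
proof -
  have Pc: "\<And>a. a \<in> Aset q \<Longrightarrow> Phi a \<in> carrier_mat d d" using PhiA unfolding alg_hom_A_def by blast
  have Qc: "\<And>a. a \<in> Aset q \<Longrightarrow> Psi a \<in> carrier_mat e e" using PsiA unfolding alg_hom_A_def by blast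
  have Xc: "\<And>a. a \<in> Aset q \<Longrightarrow> Xi a \<in> carrier_mat r r" using XiA unfolding alg_hom_A_def by blast
  have Lc: "\<And>a. a \<in> Aset q \<Longrightarrow> delta a \<in> carrier_mat e d" using D unfolding is_der_def by blast
  have Ladd: "\<And>a b. a \<in> Aset q \<Longrightarrow> b \<in> Aset q \<Longrightarrow> delta (a + b) = delta a + delta b" using D unfolding is_der_def by blast
  have Lsm: "\<And>c a. c \<in> Fq q \<Longrightarrow> a \<in> Aset q \<Longrightarrow> delta (Polynomial.smult c a) = [:c:] \<cdot>\<^sub>m delta a" using D unfolding is_der_def by blast
  have Lmul: "\<And>a b. a \<in> Aset q \<Longrightarrow> b \<in> Aset q \<Longrightarrow> delta (a * b) = tm (Psi a) (delta b) + tm (delta a) (Phi b)" using D unfolding is_der_def by blast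
  have com: "\<And>b. b \<in> Aset q \<Longrightarrow> tm f (Psi b) = tm (Xi b) f" by (rule commute_all[OF XiA PsiA f ft])
  show ?thesis unfolding is_der_def
  proof (intro conjI ballI)
    fix a :: "'k poly" assume a: "a \<in> Aset q"
    show "tm f (delta a) \<in> carrier_mat r d" using Lc[OF a] f by auto
  next
    fix a b :: "'k poly" assume a: "a \<in> Aset q" and b: "b \<in> Aset q"
    show "tm f (delta (a + b)) = tm f (delta a) + tm f (delta b)"
      unfolding Ladd[OF a b] by (rule tm_add_right[OF f Lc[OF a] Lc[OF b]])
  next
    fix c :: 'k and a :: "'k poly" assume c: "c \<in> Fq q" and a: "a \<in> Aset q"
    show "tm f (delta (Polynomial.smult c a)) = [:c:] \<cdot>\<^sub>m tm f (delta a)"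
      unfolding Lsm[OF c a] by (rule tm_smult_right[OF f Lc[OF a] c])
  next
    fix a b :: "'k poly" assume a: "a \<in> Aset q" and b: "b \<in> Aset q"
    have "tm f (delta (a * b)) = tm f (tm (Psi a) (delta b)) + tm f (tm (delta a) (Phi b))"
      unfolding Lmul[OF a b] by (rule tm_add_right[OF f]) (use Qc[OF a] Lc[OF b] Lc[OF a] Pc[OF b] in auto)
    also have "tm f (tm (Psi a) (delta b)) = tm (tm f (Psi a)) (delta b)"
      by (rule tm_assoc[OF f Qc[OF a] Lc[OF b], symmetric])
    also have "tm f (Psi a) = tm (Xi a) f" by (rule com[OF a])
    also have "tm (tm (Xi a) f) (delta b) = tm (Xi a) (tm f (delta b))"
      by (rule tm_assoc[OF Xc[OF a] f Lc[OF b]])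
    also have "tm f (tm (delta a) (Phi b)) = tm (tm f (delta a)) (Phi b)"
      by (rule tm_assoc[OF f Lc[OF a] Pc[OF b], symmetric])
    finally show "tm f (delta (a * b)) = tm (Xi a) (tm f (delta b)) + tm (tm f (delta a)) (Phi b)" .
  qed
qed

end


context tw begin

lemma tm_one_left_d[simp]: "dim_row A = n \<Longrightarrow> tm (1\<^sub>m n) A = A"
  by (rule tm_one_left[of _ n "dim_col A"]) auto
lemma tm_one_right_d[simp]: "dim_col A = n \<Longrightarrow> tm A (1\<^sub>m n) = A"
  by (rule tm_one_right[of _ "dim_row A" n]) auto
lemma tm_zero_left_d[simp]: "dim_row B = m \<Longrightarrow> tm (0\<^sub>m n m) B = 0\<^sub>m n (dim_col B)"
  by (rule tm_zero_left[of _ m "dim_col B"]) auto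
lemma tm_zero_right_d[simp]: "dim_col A = m \<Longrightarrow> tm A (0\<^sub>m m l) = 0\<^sub>m (dim_row A) l"
  by (rule tm_zero_right[of _ "dim_row A" m]) auto
lemma add_zero_left_d[simp]: "dim_row A = n \<Longrightarrow> dim_col A = m \<Longrightarrow> 0\<^sub>m n m + (A::'k poly mat) = A"
  by (rule eq_matI) auto
lemma add_zero_right_d[simp]: "dim_row A = n \<Longrightarrow> dim_col A = m \<Longrightarrow> (A::'k poly mat) + 0\<^sub>m n m = A"
  by (rule eq_matI) auto

lemma row_block_fb: "A \<in> carrier_mat n m1 \<Longrightarrow> B \<in> carrier_mat n m2 \<Longrightarrow>
  row_block A B = four_block_mat A B (0\<^sub>m 0 m1) (0\<^sub>m 0 m2)"
  unfolding row_block_def by auto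

lemma append_rows_fb: "A \<in> carrier_mat n1 m \<Longrightarrow> B \<in> carrier_mat n2 m \<Longrightarrow>
  A @\<^sub>r B = four_block_mat A (0\<^sub>m n1 0) B (0\<^sub>m n2 0)"
  unfolding append_rows_def by auto

lemma row_block_carrier[simp,intro]: "A \<in> carrier_mat n m1 \<Longrightarrow> B \<in> carrier_mat n m2 \<Longrightarrow>
  row_block A B \<in> carrier_mat n (m1 + m2)"
  unfolding row_block_def by auto

lemma R1:
  assumes A: "A \<in> carrier_mat n m1" and B: "B \<in> carrier_mat n m2"
    and E: "E \<in> carrier_mat m1 k1" and F: "F \<in> carrier_mat m1 k2"
    and G: "G \<in> carrier_mat m2 k1" and H: "H \<in> carrier_mat m2 k2"
  shows "tm (row_block A B) (four_block_mat E F G H) = row_block (tm A E + tm B G) (tm A F + tm B H)"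
proof -
  have "tm (row_block A B) (four_block_mat E F G H) =
    four_block_mat (tm A E + tm B G) (tm A F + tm B H) (tm (0\<^sub>m 0 m1) E + tm (0\<^sub>m 0 m2) G)
      (tm (0\<^sub>m 0 m1) F + tm (0\<^sub>m 0 m2) H)"
    unfolding row_block_fb[OF A B] by (rule tm_four_block) (use assms in auto)
  also have "\<dots> = row_block (tm A E + tm B G) (tm A F + tm B H)"
    unfolding row_block_def
    by (intro cong_four_block_mat refl empty_rows_eq) (use assms in auto)
  finally show ?thesis .
qed

lemma R2:
  assumes M: "M \<in> carrier_mat n m" and A: "A \<in> carrier_mat m k1" and B: "B \<in> carrier_mat m k2"
  shows "tm M (row_block A B) = row_block (tm M A) (tm M B)"
proof -
  have Mf: "M = four_block_mat M (0\<^sub>m n 0) (0\<^sub>m 0 m) (0\<^sub>m 0 0)" by (rule fb_collapse[symmetric]) (use M in auto)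
  have "tm M (row_block A B) = tm (four_block_mat M (0\<^sub>m n 0) (0\<^sub>m 0 m) (0\<^sub>m 0 0)) (four_block_mat A B (0\<^sub>m 0 k1) (0\<^sub>m 0 k2))"
    using Mf row_block_fb[OF A B] by simp
  also have "\<dots> = four_block_mat (tm M A + tm (0\<^sub>m n 0) (0\<^sub>m 0 k1)) (tm M B + tm (0\<^sub>m n 0) (0\<^sub>m 0 k2))
     (tm (0\<^sub>m 0 m) A + tm (0\<^sub>m 0 0) (0\<^sub>m 0 k1)) (tm (0\<^sub>m 0 m) B + tm (0\<^sub>m 0 0) (0\<^sub>m 0 k2))"
    by (rule tm_four_block) (use assms in auto)
  also have "\<dots> = row_block (tm M A) (tm M B)"
    unfolding row_block_def
    by (rule cong_four_block_mat) (use assms in auto)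
  finally show ?thesis .
qed

lemma C1:
  assumes E: "E \<in> carrier_mat n1 m1" and F: "F \<in> carrier_mat n1 m2"
    and G: "G \<in> carrier_mat n2 m1" and H: "H \<in> carrier_mat n2 m2"
    and A: "A \<in> carrier_mat m1 k" and B: "B \<in> carrier_mat m2 k"
  shows "tm (four_block_mat E F G H) (A @\<^sub>r B) = (tm E A + tm F B) @\<^sub>r (tm G A + tm H B)"
proof -
  have "tm (four_block_mat E F G H) (A @\<^sub>r B) =
     four_block_mat (tm E A + tm F B) (tm E (0\<^sub>m m1 0) + tm F (0\<^sub>m m2 0))
       (tm G A + tm H B) (tm G (0\<^sub>m m1 0) + tm H (0\<^sub>m m2 0))"
    unfolding append_rows_fb[OF A B] by (rule tm_four_block) (use assms in auto)
  also have "\<dots> = (tm E A + tm F B) @\<^sub>r (tm G A + tm H B)"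
    unfolding append_rows_def
    by (intro cong_four_block_mat refl empty_cols_eq) (use assms in auto)
  finally show ?thesis .
qed

lemma C2:
  assumes A: "A \<in> carrier_mat n1 m" and B: "B \<in> carrier_mat n2 m" and M: "M \<in> carrier_mat m k"
  shows "tm (A @\<^sub>r B) M = (tm A M) @\<^sub>r (tm B M)"
proof -
  have Mf: "M = four_block_mat M (0\<^sub>m m 0) (0\<^sub>m 0 k) (0\<^sub>m 0 0)" by (rule fb_collapse[symmetric]) (use M in auto)
  have "tm (A @\<^sub>r B) M = tm (four_block_mat A (0\<^sub>m n1 0) B (0\<^sub>m n2 0)) (four_block_mat M (0\<^sub>m m 0) (0\<^sub>m 0 k) (0\<^sub>m 0 0))"
    using Mf append_rows_fb[OF A B] by simp
  also have "\<dots> = four_block_mat (tm A M + tm (0\<^sub>m n1 0) (0\<^sub>m 0 k)) (tm A (0\<^sub>m m 0) + tm (0\<^sub>m n1 0) (0\<^sub>m 0 0))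
     (tm B M + tm (0\<^sub>m n2 0) (0\<^sub>m 0 k)) (tm B (0\<^sub>m m 0) + tm (0\<^sub>m n2 0) (0\<^sub>m 0 0))"
    by (rule tm_four_block) (use assms in auto)
  also have "\<dots> = (tm A M) @\<^sub>r (tm B M)"
    unfolding append_rows_def
    by (rule cong_four_block_mat) (use assms in auto)
  finally show ?thesis .
qed

lemma RC:
  assumes A: "A \<in> carrier_mat n m1" and B: "B \<in> carrier_mat n m2"
    and C: "C \<in> carrier_mat m1 k" and D: "D \<in> carrier_mat m2 k"
  shows "tm (row_block A B) (C @\<^sub>r D) = tm A C + tm B D"
proof -
  have "tm (row_block A B) (C @\<^sub>r D) = four_block_mat (tm A C + tm B D) (tm A (0\<^sub>m m1 0) + tm B (0\<^sub>m m2 0))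
     (tm (0\<^sub>m 0 m1) C + tm (0\<^sub>m 0 m2) D) (tm (0\<^sub>m 0 m1) (0\<^sub>m m1 0) + tm (0\<^sub>m 0 m2) (0\<^sub>m m2 0))"
    unfolding row_block_fb[OF A B] append_rows_fb[OF C D] by (rule tm_four_block) (use assms in auto)
  also have "\<dots> = tm A C + tm B D"
    by (rule fb_collapse) (use assms in auto)
  finally show ?thesis .
qed

lemma row_inj:
  assumes "A \<in> carrier_mat n m1" "B \<in> carrier_mat n m2" "A' \<in> carrier_mat n m1" "B' \<in> carrier_mat n m2"
    and "row_block A B = row_block A' B'"
  shows "A = A' \<and> B = B'"
  using fb_inj[of A n m1 B m2 "0\<^sub>m 0 m1" 0 "0\<^sub>m 0 m2" A' B' "0\<^sub>m 0 m1" "0\<^sub>m 0 m2"] assms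
  unfolding row_block_fb[OF assms(1,2)] row_block_fb[OF assms(3,4)] by auto

lemma col_inj:
  assumes "A \<in> carrier_mat n1 m" "B \<in> carrier_mat n2 m" "A' \<in> carrier_mat n1 m" "B' \<in> carrier_mat n2 m"
    and "A @\<^sub>r B = A' @\<^sub>r B'"
  shows "A = A' \<and> B = B'"
  using fb_inj[of A n1 m "0\<^sub>m n1 0" 0 B n2 "0\<^sub>m n2 0" A' "0\<^sub>m n1 0" B' "0\<^sub>m n2 0"] assms
  unfolding append_rows_fb[OF assms(1,2)] append_rows_fb[OF assms(3,4)] by auto

end


context tw begin

lemma pullback_main:
  fixes Phi Psi delta Xi :: "'k poly \<Rightarrow> 'k poly mat" and g :: "'k poly mat"
  assumes Phi: "tmodule q theta d Phi" and Psi: "tmodule q theta e Psi" and D: "is_der q d Phi e Psi delta"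
    and Xi: "tmodule q theta r Xi" and gm: "tmorph q r Xi d Phi g"
  shows "is_pullback q theta (d + e) (\<lambda>a. four_block_mat (Phi a) (0\<^sub>m d e) (delta a) (Psi a)) d Phi r Xi
         (row_block (1\<^sub>m d) (0\<^sub>m d e)) g
         (r + e) (\<lambda>a. four_block_mat (Xi a) (0\<^sub>m r e) (tm (delta a) g) (Psi a))
         (row_block (1\<^sub>m r) (0\<^sub>m r e))
         (four_block_mat g (0\<^sub>m d e) (0\<^sub>m e r) (1\<^sub>m e))"
proof -
  have PhiA: "alg_hom_A q d Phi" and PsiA: "alg_hom_A q e Psi" and XiA: "alg_hom_A q r Xi"
    using Phi Psi Xi unfolding tmodule_def by blast+
  have t: "(tvar::'k poly) \<in> Aset q" by simp
  have Pt: "Phi tvar \<in> carrier_mat d d" using PhiA t unfolding alg_hom_A_def by blast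
  have St: "Psi tvar \<in> carrier_mat e e" using PsiA t unfolding alg_hom_A_def by blast
  have Xt: "Xi tvar \<in> carrier_mat r r" using XiA t unfolding alg_hom_A_def by blast
  have Lt: "delta tvar \<in> carrier_mat e d" using D t unfolding is_der_def by blast
  have g: "g \<in> carrier_mat d r" and gt: "tm g (Xi tvar) = tm (Phi tvar) g" using gm unfolding tmorph_def by blast+
  have Lg: "tm (delta tvar) g \<in> carrier_mat e r" using Lt g by auto
  note dims = carrier_matD[OF Pt] carrier_matD[OF St] carrier_matD[OF Xt] carrier_matD[OF Lt]
    carrier_matD[OF g] carrier_matD[OF Lg]
  let ?X = "\<lambda>a. four_block_mat (Phi a) (0\<^sub>m d e) (delta a) (Psi a)"
  let ?Y = "\<lambda>a. four_block_mat (Xi a) (0\<^sub>m r e) (tm (delta a) g) (Psi a)"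
  let ?P1 = "row_block (1\<^sub>m r) (0\<^sub>m r e)"
  let ?P2 = "four_block_mat g (0\<^sub>m d e) (0\<^sub>m e r) (1\<^sub>m e)"
  let ?Pi = "row_block (1\<^sub>m d) (0\<^sub>m d e)"
  have Ymod: "tmodule q theta (r + e) ?Y"
    by (rule der_ext_tmodule[OF Xi Psi der_comp_right[OF D PhiA PsiA XiA g gt]])
  have P1c: "?P1 \<in> carrier_mat r (r + e)" by (rule row_block_carrier[OF one_carrier_mat zero_carrier_mat])
  have P2c: "?P2 \<in> carrier_mat (d + e) (r + e)" by (rule four_block_carrier_mat[OF g one_carrier_mat])
  have P1m: "tmorph q (r + e) ?Y r Xi ?P1"
    unfolding tmorph_def
  proof (intro conjI P1c)
    have "tm ?P1 (?Y tvar) = row_block (tm (1\<^sub>m r) (Xi tvar) + tm (0\<^sub>m r e) (tm (delta tvar) g))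
       (tm (1\<^sub>m r) (0\<^sub>m r e) + tm (0\<^sub>m r e) (Psi tvar))"
      by (rule R1[OF one_carrier_mat zero_carrier_mat Xt zero_carrier_mat Lg St])
    also have "\<dots> = row_block (Xi tvar) (0\<^sub>m r e)" using dims by simp
    also have "\<dots> = row_block (tm (Xi tvar) (1\<^sub>m r)) (tm (Xi tvar) (0\<^sub>m r e))" using dims by simp
    also have "\<dots> = tm (Xi tvar) ?P1" by (rule R2[OF Xt one_carrier_mat zero_carrier_mat, symmetric])
    finally show "tm ?P1 (?Y tvar) = tm (Xi tvar) ?P1" .
  qed
  have P2m: "tmorph q (r + e) ?Y (d + e) ?X ?P2"
    unfolding tmorph_def
  proof (intro conjI P2c)
    have "tm ?P2 (?Y tvar) = four_block_mat (tm g (Xi tvar) + tm (0\<^sub>m d e) (tm (delta tvar) g))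
        (tm g (0\<^sub>m r e) + tm (0\<^sub>m d e) (Psi tvar))
        (tm (0\<^sub>m e r) (Xi tvar) + tm (1\<^sub>m e) (tm (delta tvar) g)) (tm (0\<^sub>m e r) (0\<^sub>m r e) + tm (1\<^sub>m e) (Psi tvar))"
      by (rule tm_four_block[OF g zero_carrier_mat zero_carrier_mat one_carrier_mat Xt zero_carrier_mat Lg St])
    also have "\<dots> = four_block_mat (tm g (Xi tvar)) (0\<^sub>m d e) (tm (delta tvar) g) (Psi tvar)"
      using dims by simp
    also have "\<dots> = four_block_mat (tm (Phi tvar) g + tm (0\<^sub>m d e) (0\<^sub>m e r))
        (tm (Phi tvar) (0\<^sub>m d e) + tm (0\<^sub>m d e) (1\<^sub>m e))
        (tm (delta tvar) g + tm (Psi tvar) (0\<^sub>m e r)) (tm (delta tvar) (0\<^sub>m d e) + tm (Psi tvar) (1\<^sub>m e))"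
      using dims gt by simp
    also have "\<dots> = tm (?X tvar) ?P2"
      by (rule tm_four_block[OF Pt zero_carrier_mat Lt St g zero_carrier_mat zero_carrier_mat one_carrier_mat, symmetric])
    finally show "tm ?P2 (?Y tvar) = tm (?X tvar) ?P2" .
  qed
  have comm: "tm g ?P1 = tm ?Pi ?P2"
  proof -
    have "tm g ?P1 = row_block (tm g (1\<^sub>m r)) (tm g (0\<^sub>m r e))" by (rule R2[OF g one_carrier_mat zero_carrier_mat])
    also have "\<dots> = row_block (tm (1\<^sub>m d) g + tm (0\<^sub>m d e) (0\<^sub>m e r)) (tm (1\<^sub>m d) (0\<^sub>m d e) + tm (0\<^sub>m d e) (1\<^sub>m e))"
      using dims by simp
    also have "\<dots> = tm ?Pi ?P2" by (rule R1[OF one_carrier_mat zero_carrier_mat g zero_carrier_mat zero_carrier_mat one_carrier_mat, symmetric])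
    finally show ?thesis .
  qed
  have univ: "\<exists>!w. tmorph q s Z (r + e) ?Y w \<and> tm ?P1 w = u \<and> tm ?P2 w = v"
    if Z: "tmodule q theta s Z" and um: "tmorph q s Z r Xi u" and vm: "tmorph q s Z (d + e) ?X v"
      and uv: "tm g u = tm ?Pi v" for s Z u v
  proof -
    have ZA: "alg_hom_A q s Z" using Z unfolding tmodule_def by blast
    have Zt: "Z tvar \<in> carrier_mat s s" using ZA t unfolding alg_hom_A_def by blast
    have u: "u \<in> carrier_mat r s" and ut: "tm u (Z tvar) = tm (Xi tvar) u" using um unfolding tmorph_def by blast+
    have v: "v \<in> carrier_mat (d + e) s" and vt: "tm v (Z tvar) = tm (?X tvar) v" using vm unfolding tmorph_def by blast+
    obtain v1 v2 where v1: "v1 \<in> carrier_mat d s" and v2: "v2 \<in> carrier_mat e s"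
      and vs0: "v = four_block_mat v1 (0\<^sub>m d 0) v2 (0\<^sub>m e 0)" using split_rows[OF v] by blast
    have vs: "v = v1 @\<^sub>r v2" using vs0 append_rows_fb[OF v1 v2] by simp
    note dims2 = carrier_matD[OF Zt] carrier_matD[OF u] carrier_matD[OF v1] carrier_matD[OF v2]
    have "tm ?Pi v = tm (1\<^sub>m d) v1 + tm (0\<^sub>m d e) v2" unfolding vs by (rule RC[OF one_carrier_mat zero_carrier_mat v1 v2])
    also have "\<dots> = v1" using dims2 by simp
    finally have v1eq: "v1 = tm g u" using uv by simp
    have key: "tm v2 (Z tvar) = tm (delta tvar) v1 + tm (Psi tvar) v2"
    proof -
      have "(tm v1 (Z tvar)) @\<^sub>r (tm v2 (Z tvar)) = tm v (Z tvar)" unfolding vs by (rule C2[OF v1 v2 Zt, symmetric])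
      also have "\<dots> = tm (?X tvar) v" by (rule vt)
      also have "\<dots> = (tm (Phi tvar) v1 + tm (0\<^sub>m d e) v2) @\<^sub>r (tm (delta tvar) v1 + tm (Psi tvar) v2)"
        unfolding vs by (rule C1[OF Pt zero_carrier_mat Lt St v1 v2])
      finally have "(tm v1 (Z tvar)) @\<^sub>r (tm v2 (Z tvar)) = (tm (Phi tvar) v1 + tm (0\<^sub>m d e) v2) @\<^sub>r (tm (delta tvar) v1 + tm (Psi tvar) v2)" .
      moreover have "tm v1 (Z tvar) \<in> carrier_mat d s" "tm v2 (Z tvar) \<in> carrier_mat e s"
        "tm (Phi tvar) v1 + tm (0\<^sub>m d e) v2 \<in> carrier_mat d s" "tm (delta tvar) v1 + tm (Psi tvar) v2 \<in> carrier_mat e s"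
        unfolding carrier_mat_def using dims dims2 by simp_all
      ultimately show ?thesis using col_inj by blast
    qed
    let ?w = "u @\<^sub>r v2"
    have wc: "?w \<in> carrier_mat (r + e) s" by (rule carrier_append_rows[OF u v2])
    show ?thesis
    proof (rule ex1I[of _ ?w], intro conjI)
      show "tmorph q s Z (r + e) ?Y ?w" unfolding tmorph_def
      proof (intro conjI wc)
        have "tm ?w (Z tvar) = (tm u (Z tvar)) @\<^sub>r (tm v2 (Z tvar))" by (rule C2[OF u v2 Zt])
        also have "\<dots> = (tm (Xi tvar) u) @\<^sub>r (tm (tm (delta tvar) g) u + tm (Psi tvar) v2)"
          unfolding ut key v1eq tm_assoc[OF Lt g u] ..
        also have "\<dots> = (tm (Xi tvar) u + tm (0\<^sub>m r e) v2) @\<^sub>r (tm (tm (delta tvar) g) u + tm (Psi tvar) v2)"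
          using dims dims2 by simp
        also have "\<dots> = tm (?Y tvar) ?w" by (rule C1[OF Xt zero_carrier_mat Lg St u v2, symmetric])
        finally show "tm ?w (Z tvar) = tm (?Y tvar) ?w" .
      qed
      show "tm ?P1 ?w = u"
      proof -
        have "tm ?P1 ?w = tm (1\<^sub>m r) u + tm (0\<^sub>m r e) v2" by (rule RC[OF one_carrier_mat zero_carrier_mat u v2])
        then show ?thesis using dims2 by simp
      qed
      show "tm ?P2 ?w = v"
      proof -
        have "tm ?P2 ?w = (tm g u + tm (0\<^sub>m d e) v2) @\<^sub>r (tm (0\<^sub>m e r) u + tm (1\<^sub>m e) v2)"
          by (rule C1[OF g zero_carrier_mat zero_carrier_mat one_carrier_mat u v2])
        then show ?thesis using dims dims2 v1eq vs by simp
      qed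
    next
      fix w assume h: "tmorph q s Z (r + e) ?Y w \<and> tm ?P1 w = u \<and> tm ?P2 w = v"
      then have w: "w \<in> carrier_mat (r + e) s" unfolding tmorph_def by blast
      obtain w1 w2 where w1: "w1 \<in> carrier_mat r s" and w2: "w2 \<in> carrier_mat e s"
        and ws0: "w = four_block_mat w1 (0\<^sub>m r 0) w2 (0\<^sub>m e 0)" using split_rows[OF w] by blast
      have ws: "w = w1 @\<^sub>r w2" using ws0 append_rows_fb[OF w1 w2] by simp
      note dims3 = carrier_matD[OF w1] carrier_matD[OF w2]
      have "tm ?P1 w = tm (1\<^sub>m r) w1 + tm (0\<^sub>m r e) w2" unfolding ws by (rule RC[OF one_carrier_mat zero_carrier_mat w1 w2])
      then have w1u: "w1 = u" using h dims3 by simp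
      have "tm ?P2 w = (tm g w1 + tm (0\<^sub>m d e) w2) @\<^sub>r (tm (0\<^sub>m e r) w1 + tm (1\<^sub>m e) w2)"
        unfolding ws by (rule C1[OF g zero_carrier_mat zero_carrier_mat one_carrier_mat w1 w2])
      then have "(tm g w1) @\<^sub>r w2 = v1 @\<^sub>r v2" using h dims dims3 vs by simp
      moreover have "tm g w1 \<in> carrier_mat d s" unfolding carrier_mat_def using dims dims3 by simp
      ultimately have "w2 = v2" using col_inj[OF _ w2 v1 v2] by blast
      then show "w = ?w" using ws w1u by simp
    qed
  qed
  show ?thesis unfolding is_pullback_def
    using Ymod P1m P2m comm univ by blast
qed

end


context tw begin

lemma pushout_main:
  fixes Phi Psi delta Xi :: "'k poly \<Rightarrow> 'k poly mat" and f :: "'k poly mat"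
  assumes Phi: "tmodule q theta d Phi" and Psi: "tmodule q theta e Psi" and D: "is_der q d Phi e Psi delta"
    and Xi: "tmodule q theta r Xi" and fm: "tmorph q e Psi r Xi f"
  shows "is_pushout q theta (d + e) (\<lambda>a. four_block_mat (Phi a) (0\<^sub>m d e) (delta a) (Psi a)) e Psi r Xi
         (0\<^sub>m d e @\<^sub>r 1\<^sub>m e) f
         (d + r) (\<lambda>a. four_block_mat (Phi a) (0\<^sub>m d r) (tm f (delta a)) (Xi a))
         (0\<^sub>m d r @\<^sub>r 1\<^sub>m r)
         (four_block_mat (1\<^sub>m d) (0\<^sub>m d e) (0\<^sub>m r d) f)"
proof -
  have PhiA: "alg_hom_A q d Phi" and PsiA: "alg_hom_A q e Psi" and XiA: "alg_hom_A q r Xi"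
    using Phi Psi Xi unfolding tmodule_def by blast+
  have t: "(tvar::'k poly) \<in> Aset q" by simp
  have Pt: "Phi tvar \<in> carrier_mat d d" using PhiA t unfolding alg_hom_A_def by blast
  have St: "Psi tvar \<in> carrier_mat e e" using PsiA t unfolding alg_hom_A_def by blast
  have Xt: "Xi tvar \<in> carrier_mat r r" using XiA t unfolding alg_hom_A_def by blast
  have Lt: "delta tvar \<in> carrier_mat e d" using D t unfolding is_der_def by blast
  have f: "f \<in> carrier_mat r e" and ft: "tm f (Psi tvar) = tm (Xi tvar) f" using fm unfolding tmorph_def by blast+
  have Lf: "tm f (delta tvar) \<in> carrier_mat r d" using Lt f by auto
  note dims = carrier_matD[OF Pt] carrier_matD[OF St] carrier_matD[OF Xt] carrier_matD[OF Lt]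
    carrier_matD[OF f] carrier_matD[OF Lf]
  let ?X = "\<lambda>a. four_block_mat (Phi a) (0\<^sub>m d e) (delta a) (Psi a)"
  let ?Y = "\<lambda>a. four_block_mat (Phi a) (0\<^sub>m d r) (tm f (delta a)) (Xi a)"
  let ?J1 = "0\<^sub>m d r @\<^sub>r 1\<^sub>m r"
  let ?J2 = "four_block_mat (1\<^sub>m d) (0\<^sub>m d e) (0\<^sub>m r d) f"
  let ?I = "0\<^sub>m d e @\<^sub>r 1\<^sub>m e"
  have Ymod: "tmodule q theta (d + r) ?Y"
    by (rule der_ext_tmodule[OF Phi Xi der_comp_left[OF D PhiA PsiA XiA f ft]])
  have J1c: "?J1 \<in> carrier_mat (d + r) r" by (rule carrier_append_rows[OF zero_carrier_mat one_carrier_mat])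
  have J2c: "?J2 \<in> carrier_mat (d + r) (d + e)" by (rule four_block_carrier_mat[OF one_carrier_mat f])
  have J1m: "tmorph q r Xi (d + r) ?Y ?J1"
    unfolding tmorph_def
  proof (intro conjI J1c)
    have "tm ?J1 (Xi tvar) = (tm (0\<^sub>m d r) (Xi tvar)) @\<^sub>r (tm (1\<^sub>m r) (Xi tvar))"
      by (rule C2[OF zero_carrier_mat one_carrier_mat Xt])
    also have "\<dots> = (tm (Phi tvar) (0\<^sub>m d r) + tm (0\<^sub>m d r) (1\<^sub>m r)) @\<^sub>r (tm (tm f (delta tvar)) (0\<^sub>m d r) + tm (Xi tvar) (1\<^sub>m r))"
      using dims by simp
    also have "\<dots> = tm (?Y tvar) ?J1"
      by (rule C1[OF Pt zero_carrier_mat Lf Xt zero_carrier_mat one_carrier_mat, symmetric])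
    finally show "tm ?J1 (Xi tvar) = tm (?Y tvar) ?J1" .
  qed
  have J2m: "tmorph q (d + e) ?X (d + r) ?Y ?J2"
    unfolding tmorph_def
  proof (intro conjI J2c)
    have "tm ?J2 (?X tvar) = four_block_mat (tm (1\<^sub>m d) (Phi tvar) + tm (0\<^sub>m d e) (delta tvar))
        (tm (1\<^sub>m d) (0\<^sub>m d e) + tm (0\<^sub>m d e) (Psi tvar))
        (tm (0\<^sub>m r d) (Phi tvar) + tm f (delta tvar)) (tm (0\<^sub>m r d) (0\<^sub>m d e) + tm f (Psi tvar))"
      by (rule tm_four_block[OF one_carrier_mat zero_carrier_mat zero_carrier_mat f Pt zero_carrier_mat Lt St])
    also have "\<dots> = four_block_mat (tm (Phi tvar) (1\<^sub>m d) + tm (0\<^sub>m d r) (0\<^sub>m r d))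
        (tm (Phi tvar) (0\<^sub>m d e) + tm (0\<^sub>m d r) f)
        (tm (tm f (delta tvar)) (1\<^sub>m d) + tm (Xi tvar) (0\<^sub>m r d)) (tm (tm f (delta tvar)) (0\<^sub>m d e) + tm (Xi tvar) f)"
      using dims ft by simp
    also have "\<dots> = tm (?Y tvar) ?J2"
      by (rule tm_four_block[OF Pt zero_carrier_mat Lf Xt one_carrier_mat zero_carrier_mat zero_carrier_mat f, symmetric])
    finally show "tm ?J2 (?X tvar) = tm (?Y tvar) ?J2" .
  qed
  have comm: "tm ?J1 f = tm ?J2 ?I"
  proof -
    have "tm ?J1 f = (tm (0\<^sub>m d r) f) @\<^sub>r (tm (1\<^sub>m r) f)" by (rule C2[OF zero_carrier_mat one_carrier_mat f])
    also have "\<dots> = (tm (1\<^sub>m d) (0\<^sub>m d e) + tm (0\<^sub>m d e) (1\<^sub>m e)) @\<^sub>r (tm (0\<^sub>m r d) (0\<^sub>m d e) + tm f (1\<^sub>m e))"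
      using dims by simp
    also have "\<dots> = tm ?J2 ?I"
      by (rule C1[OF one_carrier_mat zero_carrier_mat zero_carrier_mat f zero_carrier_mat one_carrier_mat, symmetric])
    finally show ?thesis .
  qed
  have univ: "\<exists>!w. tmorph q (d + r) ?Y s Z w \<and> tm w ?J1 = u \<and> tm w ?J2 = v"
    if Z: "tmodule q theta s Z" and um: "tmorph q r Xi s Z u" and vm: "tmorph q (d + e) ?X s Z v"
      and uv: "tm u f = tm v ?I" for s Z u v
  proof -
    have ZA: "alg_hom_A q s Z" using Z unfolding tmodule_def by blast
    have Zt: "Z tvar \<in> carrier_mat s s" using ZA t unfolding alg_hom_A_def by blast
    have u: "u \<in> carrier_mat s r" and ut: "tm u (Xi tvar) = tm (Z tvar) u" using um unfolding tmorph_def by blast+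
    have v: "v \<in> carrier_mat s (d + e)" and vt: "tm v (?X tvar) = tm (Z tvar) v" using vm unfolding tmorph_def by blast+
    obtain v1 v2 where v1: "v1 \<in> carrier_mat s d" and v2: "v2 \<in> carrier_mat s e"
      and vs0: "v = four_block_mat v1 v2 (0\<^sub>m 0 d) (0\<^sub>m 0 e)" using split_cols[OF v] by blast
    have vs: "v = row_block v1 v2" using vs0 row_block_fb[OF v1 v2] by simp
    note dims2 = carrier_matD[OF Zt] carrier_matD[OF u] carrier_matD[OF v1] carrier_matD[OF v2]
    have "tm v ?I = tm v1 (0\<^sub>m d e) + tm v2 (1\<^sub>m e)" unfolding vs by (rule RC[OF v1 v2 zero_carrier_mat one_carrier_mat])
    also have "\<dots> = v2" using dims2 by simp
    finally have v2eq: "v2 = tm u f" using uv by simp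
    have key: "tm v1 (Phi tvar) + tm v2 (delta tvar) = tm (Z tvar) v1"
    proof -
      have "row_block (tm v1 (Phi tvar) + tm v2 (delta tvar)) (tm v1 (0\<^sub>m d e) + tm v2 (Psi tvar)) = tm v (?X tvar)"
        unfolding vs by (rule R1[OF v1 v2 Pt zero_carrier_mat Lt St, symmetric])
      also have "\<dots> = tm (Z tvar) v" by (rule vt)
      also have "\<dots> = row_block (tm (Z tvar) v1) (tm (Z tvar) v2)"
        unfolding vs by (rule R2[OF Zt v1 v2])
      finally have "row_block (tm v1 (Phi tvar) + tm v2 (delta tvar)) (tm v1 (0\<^sub>m d e) + tm v2 (Psi tvar))
         = row_block (tm (Z tvar) v1) (tm (Z tvar) v2)" .
      moreover have "tm v1 (Phi tvar) + tm v2 (delta tvar) \<in> carrier_mat s d"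
        "tm v1 (0\<^sub>m d e) + tm v2 (Psi tvar) \<in> carrier_mat s e"
        "tm (Z tvar) v1 \<in> carrier_mat s d" "tm (Z tvar) v2 \<in> carrier_mat s e"
        unfolding carrier_mat_def using dims dims2 by simp_all
      ultimately show ?thesis using row_inj by blast
    qed
    let ?w = "row_block v1 u"
    have wc: "?w \<in> carrier_mat s (d + r)" by (rule row_block_carrier[OF v1 u])
    show ?thesis
    proof (rule ex1I[of _ ?w], intro conjI)
      show "tmorph q (d + r) ?Y s Z ?w" unfolding tmorph_def
      proof (intro conjI wc)
        have "tm ?w (?Y tvar) = row_block (tm v1 (Phi tvar) + tm u (tm f (delta tvar)))
            (tm v1 (0\<^sub>m d r) + tm u (Xi tvar))"
          by (rule R1[OF v1 u Pt zero_carrier_mat Lf Xt])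
        also have "tm u (tm f (delta tvar)) = tm v2 (delta tvar)"
          unfolding v2eq by (rule tm_assoc[OF u f Lt, symmetric])
        also have "tm v1 (Phi tvar) + tm v2 (delta tvar) = tm (Z tvar) v1" by (rule key)
        also have "tm v1 (0\<^sub>m d r) + tm u (Xi tvar) = tm (Z tvar) u"
          using dims dims2 ut by simp
        also have "row_block (tm (Z tvar) v1) (tm (Z tvar) u) = tm (Z tvar) ?w"
          by (rule R2[OF Zt v1 u, symmetric])
        finally show "tm ?w (?Y tvar) = tm (Z tvar) ?w" .
      qed
      show "tm ?w ?J1 = u"
      proof -
        have "tm ?w ?J1 = tm v1 (0\<^sub>m d r) + tm u (1\<^sub>m r)" by (rule RC[OF v1 u zero_carrier_mat one_carrier_mat])
        then show ?thesis using dims2 by simp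
      qed
      show "tm ?w ?J2 = v"
      proof -
        have "tm ?w ?J2 = row_block (tm v1 (1\<^sub>m d) + tm u (0\<^sub>m r d)) (tm v1 (0\<^sub>m d e) + tm u f)"
          by (rule R1[OF v1 u one_carrier_mat zero_carrier_mat zero_carrier_mat f])
        then show ?thesis using dims dims2 v2eq vs by simp
      qed
    next
      fix w assume h: "tmorph q (d + r) ?Y s Z w \<and> tm w ?J1 = u \<and> tm w ?J2 = v"
      then have w: "w \<in> carrier_mat s (d + r)" unfolding tmorph_def by blast
      obtain w1 w2 where w1: "w1 \<in> carrier_mat s d" and w2: "w2 \<in> carrier_mat s r"
        and ws0: "w = four_block_mat w1 w2 (0\<^sub>m 0 d) (0\<^sub>m 0 r)" using split_cols[OF w] by blast
      have ws: "w = row_block w1 w2" using ws0 row_block_fb[OF w1 w2] by simp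
      note dims3 = carrier_matD[OF w1] carrier_matD[OF w2]
      have "tm w ?J1 = tm w1 (0\<^sub>m d r) + tm w2 (1\<^sub>m r)" unfolding ws by (rule RC[OF w1 w2 zero_carrier_mat one_carrier_mat])
      then have w2u: "w2 = u" using h dims3 by simp
      have "tm w ?J2 = row_block (tm w1 (1\<^sub>m d) + tm w2 (0\<^sub>m r d)) (tm w1 (0\<^sub>m d e) + tm w2 f)"
        unfolding ws by (rule R1[OF w1 w2 one_carrier_mat zero_carrier_mat zero_carrier_mat f])
      then have "row_block w1 (tm w2 f) = row_block v1 v2" using h dims dims3 vs by simp
      moreover have "tm w2 f \<in> carrier_mat s e" unfolding carrier_mat_def using dims dims3 by simp
      ultimately have "w1 = v1" using row_inj[OF w1 _ v1 v2] by blast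
      then show "w = ?w" using ws w2u by simp
    qed
  qed
  show ?thesis unfolding is_pushout_def
    using Ymod J1m J2m comm univ by blast
qed

end
theorem theorem10p1:
  fixes p m q :: nat and theta :: "'k::field"
    and d e :: nat and Phi Psi delta :: "'k poly \<Rightarrow> 'k poly mat"
  assumes "prime p" and "of_nat p = (0::'k)" and "m \<ge> 1" and "q = p ^ m"
    and "card (Fq q :: 'k set) = q"
    and "tmodule q theta d Phi" and "tmodule q theta e Psi"
    and "is_der q d Phi e Psi delta"
  defines "X \<equiv> \<lambda>a. four_block_mat (Phi a) (0\<^sub>m d e) (delta a) (Psi a)"
    and "IM \<equiv> 0\<^sub>m d e @\<^sub>r 1\<^sub>m e"
    and "PiM \<equiv> row_block (1\<^sub>m d) (0\<^sub>m d e)"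
  shows
   "(\<forall>r Xi g. tmodule q theta r Xi \<and> tmorph q r Xi d Phi g \<longrightarrow>
       is_pullback q theta (d + e) X d Phi r Xi PiM g
         (r + e) (\<lambda>a. four_block_mat (Xi a) (0\<^sub>m r e) (tmat_mult q (delta a) g) (Psi a))
         (row_block (1\<^sub>m r) (0\<^sub>m r e))
         (four_block_mat g (0\<^sub>m d e) (0\<^sub>m e r) (1\<^sub>m e)))
  \<and> (\<forall>r Xi f. tmodule q theta r Xi \<and> tmorph q e Psi r Xi f \<longrightarrow>
       is_pushout q theta (d + e) X e Psi r Xi IM f
         (d + r) (\<lambda>a. four_block_mat (Phi a) (0\<^sub>m d r) (tmat_mult q f (delta a)) (Xi a))
         (0\<^sub>m d r @\<^sub>r 1\<^sub>m r)
         (four_block_mat (1\<^sub>m d) (0\<^sub>m d e) (0\<^sub>m r d) f))"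
proof -
  have qpos: "q > 0" using assms(1,4) prime_gt_0_nat by simp
  interpret T: tw q "TYPE('k)"
  proof
    show "(x + y :: 'k) ^ q = x ^ q + y ^ q" for x y by (rule char_frob[OF assms(1) assms(2) assms(4)])
    show "q > 0" by (rule qpos)
  qed
  show ?thesis
    unfolding X_def IM_def PiM_def
  proof (intro conjI allI impI)
    fix r Xi g assume h: "tmodule q theta r Xi \<and> tmorph q r Xi d Phi g"
    show "is_pullback q theta (d + e) (\<lambda>a. four_block_mat (Phi a) (0\<^sub>m d e) (delta a) (Psi a)) d Phi r Xi
         (row_block (1\<^sub>m d) (0\<^sub>m d e)) g
         (r + e) (\<lambda>a. four_block_mat (Xi a) (0\<^sub>m r e) (tmat_mult q (delta a) g) (Psi a))
         (row_block (1\<^sub>m r) (0\<^sub>m r e))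
         (four_block_mat g (0\<^sub>m d e) (0\<^sub>m e r) (1\<^sub>m e))"
      using h T.pullback_main[OF assms(6) assms(7) assms(8)] by blast
  next
    fix r Xi f assume h: "tmodule q theta r Xi \<and> tmorph q e Psi r Xi f"
    show "is_pushout q theta (d + e) (\<lambda>a. four_block_mat (Phi a) (0\<^sub>m d e) (delta a) (Psi a)) e Psi r Xi
         (0\<^sub>m d e @\<^sub>r 1\<^sub>m e) f
         (d + r) (\<lambda>a. four_block_mat (Phi a) (0\<^sub>m d r) (tmat_mult q f (delta a)) (Xi a))
         (0\<^sub>m d r @\<^sub>r 1\<^sub>m r)
         (four_block_mat (1\<^sub>m d) (0\<^sub>m d e) (0\<^sub>m r d) f)"
      using h T.pushout_main[OF assms(6) assms(7) assms(8)] by blast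
  qed
qed

end
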